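(* Let $\mathcal M=\{1,\dots,M\}$, $\mathcal N=\{1,\dots,N\}$, let $\{\mathbf v_n\}_{n\in\mathcal N}$, $\mathbf v_n=(v_{1n},\dots,v_{Mn})\in\mathbb R^M$, be (announced) value vectors, and let $\epsilon>0$. Let $\Phi$ be the matching output by the Distributed Matching Algorithm (DMA) described in the context, run with these values. Then for every D2D pair $n\in\mathcal N$, $$\delta_n(\Phi)\le V(\mathcal M,\mathcal N)-V(\mathcal M,\mathcal N\setminus\{n\})+4C_1\epsilon,$$ $$\delta_n(\Phi)\ge V(\mathcal M,\mathcal N)-V(\mathcal M,\mathcal N\setminus\{n\})-(C_1+C_2+1)\epsilon,$$ where $C_1=\min\{M,N-1\}$ and $C_2=\min\{M,N\}$.
   Context: For $\mathcal M_1\subseteq\mathcal M$, $\mathcal N_1\subseteq\mathcal N$, $V(\mathcal M_1,\mathcal N_1)$ is the maximum of $\sum_{m\in\mathcal M_1,n\in\mathcal N_1}x_{mn}v_{mn}$ over $x_{mn}\in\{0,1\}$ with each $m$ and each $n$ in at most one pair. A matching is $\Phi=(\mu,\mathbf p)$ where $\mu$ is a one-to-one mapping ($\mu(m)\in\mathcal N\cup\{0\}$, $\mu(n)\in\mathcal M\cup\{0\}$, $\mu(m)=n\iff\mu(n)=m$, 0 = unmatched) and $p_m\ge0$ with $p_m=0$ if $\mu(m)=0$; $\delta_n(\Phi)=v_{\mu(n)n}-p_{\mu(n)}$ with $p_0=0$, $v_{0n}=0$. DMA: demand function $D_n(\boldsymbol\beta)=\arg\max_{m}(v_{mn}-\beta_m)$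 if $\max_m(v_{mn}-\beta_m)\ge0$, else $0$ (no ties assumed). Initialize $t=1$, $p_m=\beta^1_m=0$, all CUs unmatched. Iteration $t$: (i) each unmatched D2D pair $n$ computes $m=D_n(\boldsymbol\beta^t)$; if $m\ne0$ it proposes to CU $m$ ($g^t_{mn}=1$), else it makes no proposal and stays unmatched. (ii) For each CU $m$: if $\sum_ng^t_{mn}=0$, $\sum_ng^{t-1}_{mn}>0$ and $m$ is unmatched, match $m$ to a random $n^*$ with $g^{t-1}_{mn^*}=1$, set $p_m=\beta^{t-1}_m$, $\beta^{t+1}_m=\beta^t_m$, and set $g^t_{m^*n^*}=0$ for $m^*=D_{n^*}(\boldsymbol\beta^t)$. (iii) For each CU $m$: if $\sum_ng^t_{mn}=1$ and ($m$ was unmatched at $t-1$ or $p_m<\beta^t_m$), match $m$ to the proposer, set $p_m=\beta^t_m$, $\beta^{t+1}_m=\beta^t_m$; else if $\sum_ng^t_{mn}\ge1$, make $m$ unmatched, and if its previous partner $n\ne0$ had $p_m=\beta^t_m$ set $g^t_{mn}=1$, and set $\beta^{t+1}_m=\beta^t_m+\epsilon$; otherwise $\beta^{t+1}_m=\beta^t_m$. (iv) $t\leftarrow t+1$; stop when an iteration has no proposal; output $(\mu,\mathbf p)$. *)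

theory Defs
  imports Complex_Main
begin

text \<open>CUs are indexed by {1..M}, D2D pairs by {1..N}; the index 0 means "unmatched".
  Values: v m n is the value of D2D pair n for CU m.\<close>

definition Vopt :: "(nat \<Rightarrow> nat \<Rightarrow> real) \<Rightarrow> nat set \<Rightarrow> nat set \<Rightarrow> real" where
  "Vopt v M1 N1 = Max {(\<Sum>(m,n)\<in>X. v m n) | X. X \<subseteq> M1 \<times> N1 \<and>
      (\<forall>(m,n)\<in>X. \<forall>(m',n')\<in>X. (m = m' \<longleftrightarrow> n = n'))}"

definition demand :: "nat \<Rightarrow> (nat \<Rightarrow> nat \<Rightarrow> real) \<Rightarrow> (nat \<Rightarrow> real) \<Rightarrow> nat \<Rightarrow> nat" where
  "demand M v \<beta> n = (if \<exists>m\<in>{1..M}. v m n - \<beta> m \<ge> 0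
     then (SOME m. m \<in> {1..M} \<and> (\<forall>m'\<in>{1..M}. v m' n - \<beta> m' \<le> v m n - \<beta> m))
     else 0)"

definition no_ties :: "nat \<Rightarrow> nat \<Rightarrow> (nat \<Rightarrow> nat \<Rightarrow> real) \<Rightarrow> (nat \<Rightarrow> real) \<Rightarrow> bool" where
  "no_ties M N v \<beta> \<longleftrightarrow> (\<forall>n\<in>{1..N}. \<forall>m\<in>{1..M}. \<forall>m'\<in>{1..M}.
      (\<forall>k\<in>{1..M}. v k n - \<beta> k \<le> v m n - \<beta> m) \<longrightarrow>
      (\<forall>k\<in>{1..M}. v k n - \<beta> k \<le> v m' n - \<beta> m') \<longrightarrow> m = m')"

text \<open>State at the start of iteration t: partner of each CU (0 = unmatched), prices p,
  current bids beta^t, previous bids beta^(t-1), previous proposals g^(t-1).\<close>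
record dma_state =
  dma_mu :: "nat \<Rightarrow> nat"
  dma_price :: "nat \<Rightarrow> real"
  dma_beta :: "nat \<Rightarrow> real"
  dma_bprev :: "nat \<Rightarrow> real"
  dma_gprev :: "nat \<Rightarrow> nat \<Rightarrow> bool"

definition dma_init :: dma_state where
  "dma_init = \<lparr> dma_mu = (\<lambda>_. 0), dma_price = (\<lambda>_. 0), dma_beta = (\<lambda>_. 0),
     dma_bprev = (\<lambda>_. 0), dma_gprev = (\<lambda>_ _. False) \<rparr>"

definition d2d_unmatched :: "nat \<Rightarrow> dma_state \<Rightarrow> nat \<Rightarrow> bool" where
  "d2d_unmatched M s n \<longleftrightarrow> (\<forall>m\<in>{1..M}. dma_mu s m \<noteq> n)"

definition proposals :: "nat \<Rightarrow> nat \<Rightarrow> (nat \<Rightarrow> nat \<Rightarrow> real) \<Rightarrow> dma_state \<Rightarrow> nat \<Rightarrow> nat \<Rightarrow> bool" where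
  "proposals M N v s m n \<longleftrightarrow> n \<in> {1..N} \<and> d2d_unmatched M s n \<and> m \<noteq> 0 \<and>
      demand M v (dma_beta s) n = m"

definition has_proposal :: "nat \<Rightarrow> nat \<Rightarrow> (nat \<Rightarrow> nat \<Rightarrow> real) \<Rightarrow> dma_state \<Rightarrow> bool" where
  "has_proposal M N v s \<longleftrightarrow> (\<exists>m n. proposals M N v s m n)"

text \<open>One iteration (steps (i)-(iii)) of the DMA; nondeterministic because of the random
  choice in step (ii) (the function sel).\<close>
definition dma_iter :: "nat \<Rightarrow> nat \<Rightarrow> (nat \<Rightarrow> nat \<Rightarrow> real) \<Rightarrow> real \<Rightarrow> dma_state \<Rightarrow> dma_state \<Rightarrow> bool" where
  "dma_iter M N v eps s s' \<longleftrightarrow>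
    (let CU = {1..M}; DP = {1..N}; \<beta> = dma_beta s;
         g1 = proposals M N v s;
         A = {m \<in> CU. card {n \<in> DP. g1 m n} = 0 \<and> (\<exists>n\<in>DP. dma_gprev s m n) \<and> dma_mu s m = 0}
     in \<exists>sel. (\<forall>m\<in>A. sel m \<in> DP \<and> dma_gprev s m (sel m)) \<and>
       (let g2 = (\<lambda>m n. g1 m n \<and> n \<notin> sel ` A);
            c2 = (\<lambda>m. card {n \<in> DP. g2 m n});
            win = (\<lambda>m. m \<in> CU \<and> m \<notin> A \<and> c2 m = 1 \<and>
                        (dma_mu s m = 0 \<or> dma_price s m < \<beta> m));
            lose = (\<lambda>m. m \<in> CU \<and> m \<notin> A \<and> \<not> win m \<and> c2 m \<ge> 1)
        in s' = \<lparr> dma_mu = (\<lambda>m. if m \<in> A then sel m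
                              else if win m then (THE n. n \<in> DP \<and> g2 m n)
                              else if lose m then 0 else dma_mu s m),
                  dma_price = (\<lambda>m. if m \<in> A then dma_bprev s m
                                 else if win m then \<beta> m else dma_price s m),
                  dma_beta = (\<lambda>m. if lose m then \<beta> m + eps else \<beta> m),
                  dma_bprev = \<beta>,
                  dma_gprev = (\<lambda>m n. g2 m n \<or> (lose m \<and> dma_mu s m \<noteq> 0 \<and> n = dma_mu s m
                                                 \<and> dma_price s m = \<beta> m)) \<rparr>))"

inductive dma_reach :: "nat \<Rightarrow> nat \<Rightarrow> (nat \<Rightarrow> nat \<Rightarrow> real) \<Rightarrow> real \<Rightarrow> dma_state \<Rightarrow> bool"
  for M N v eps where
  init: "dma_reach M N v eps dma_init"
| step: "dma_reach M N v eps s \<Longrightarrow> has_proposal M N v s \<Longrightarrow> dma_iter M N v eps s s' \<Longrightarrow>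
         dma_reach M N v eps s'"

definition dma_output :: "nat \<Rightarrow> nat \<Rightarrow> (nat \<Rightarrow> nat \<Rightarrow> real) \<Rightarrow> real \<Rightarrow> dma_state \<Rightarrow> bool" where
  "dma_output M N v eps s \<longleftrightarrow>
     (\<exists>s0. dma_reach M N v eps s0 \<and> \<not> has_proposal M N v s0 \<and> dma_iter M N v eps s0 s)"

definition dma_delta :: "nat \<Rightarrow> (nat \<Rightarrow> nat \<Rightarrow> real) \<Rightarrow> dma_state \<Rightarrow> nat \<Rightarrow> real" where
  "dma_delta M v s n = (if \<exists>m\<in>{1..M}. dma_mu s m = n
     then (let m = (SOME m. m \<in> {1..M} \<and> dma_mu s m = n) in v m n - dma_price s m)
     else 0)"

end

theory Submission
  imports Defs
begin



definition Aset :: "nat \<Rightarrow> nat \<Rightarrow> (nat \<Rightarrow> nat \<Rightarrow> real) \<Rightarrow> dma_state \<Rightarrow> nat set" where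
  "Aset M N v s = {m \<in> {1..M}. card {n \<in> {1..N}. proposals M N v s m n} = 0 \<and>
      (\<exists>n\<in>{1..N}. dma_gprev s m n) \<and> dma_mu s m = 0}"

definition G2 :: "nat \<Rightarrow> nat \<Rightarrow> (nat \<Rightarrow> nat \<Rightarrow> real) \<Rightarrow> dma_state \<Rightarrow> (nat \<Rightarrow> nat) \<Rightarrow> nat \<Rightarrow> nat \<Rightarrow> bool" where
  "G2 M N v s sel m n \<longleftrightarrow> proposals M N v s m n \<and> n \<notin> sel ` Aset M N v s"

definition Win :: "nat \<Rightarrow> nat \<Rightarrow> (nat \<Rightarrow> nat \<Rightarrow> real) \<Rightarrow> dma_state \<Rightarrow> (nat \<Rightarrow> nat) \<Rightarrow> nat \<Rightarrow> bool" where
  "Win M N v s sel m \<longleftrightarrow> m \<in> {1..M} \<and> m \<notin> Aset M N v s \<and> card {n \<in> {1..N}. G2 M N v s sel m n} = 1 \<and>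
      (dma_mu s m = 0 \<or> dma_price s m < dma_beta s m)"

definition Lose :: "nat \<Rightarrow> nat \<Rightarrow> (nat \<Rightarrow> nat \<Rightarrow> real) \<Rightarrow> dma_state \<Rightarrow> (nat \<Rightarrow> nat) \<Rightarrow> nat \<Rightarrow> bool" where
  "Lose M N v s sel m \<longleftrightarrow> m \<in> {1..M} \<and> m \<notin> Aset M N v s \<and> \<not> Win M N v s sel m \<and>
      card {n \<in> {1..N}. G2 M N v s sel m n} \<ge> 1"

definition step_res :: "nat \<Rightarrow> nat \<Rightarrow> (nat \<Rightarrow> nat \<Rightarrow> real) \<Rightarrow> real \<Rightarrow> dma_state \<Rightarrow> (nat \<Rightarrow> nat) \<Rightarrow> dma_state" where
  "step_res M N v eps s sel = \<lparr> dma_mu = (\<lambda>m. if m \<in> Aset M N v s then sel m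
                              else if Win M N v s sel m then (THE n. n \<in> {1..N} \<and> G2 M N v s sel m n)
                              else if Lose M N v s sel m then 0 else dma_mu s m),
                  dma_price = (\<lambda>m. if m \<in> Aset M N v s then dma_bprev s m
                                 else if Win M N v s sel m then dma_beta s m else dma_price s m),
                  dma_beta = (\<lambda>m. if Lose M N v s sel m then dma_beta s m + eps else dma_beta s m),
                  dma_bprev = dma_beta s,
                  dma_gprev = (\<lambda>m n. G2 M N v s sel m n \<or> (Lose M N v s sel m \<and> dma_mu s m \<noteq> 0 \<and> n = dma_mu s m
                                                 \<and> dma_price s m = dma_beta s m)) \<rparr>"

lemma iter_unfold:
  "dma_iter M N v eps s s' \<longleftrightarrow> (\<exists>sel. (\<forall>m\<in>Aset M N v s. sel m \<in> {1..N} \<and> dma_gprev s m (sel m)) \<and>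
      s' = step_res M N v eps s sel)"
  unfolding dma_iter_def Let_def Aset_def step_res_def G2_def Win_def Lose_def by (rule refl)


lemma step_res_simps:
  "dma_mu (step_res M N v eps s sel) m = (if m \<in> Aset M N v s then sel m
         else if Win M N v s sel m then (THE n. n \<in> {1..N} \<and> G2 M N v s sel m n)
         else if Lose M N v s sel m then 0 else dma_mu s m)"
  "dma_price (step_res M N v eps s sel) m = (if m \<in> Aset M N v s then dma_bprev s m
         else if Win M N v s sel m then dma_beta s m else dma_price s m)"
  "dma_beta (step_res M N v eps s sel) m = (if Lose M N v s sel m then dma_beta s m + eps else dma_beta s m)"
  "dma_bprev (step_res M N v eps s sel) = dma_beta s"
  "dma_gprev (step_res M N v eps s sel) m k = (G2 M N v s sel m k \<or> (Lose M N v s sel m \<and> dma_mu s m \<noteq> 0 \<and> k = dma_mu s m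
                                                 \<and> dma_price s m = dma_beta s m))"
  by (simp_all add: step_res_def)

lemma demand_cases:
  "(demand M v b n = 0 \<and> (\<forall>m\<in>{1..M}. v m n - b m < 0)) \<or>
   (demand M v b n \<in> {1..M} \<and> 0 \<le> v (demand M v b n) n - b (demand M v b n) \<and>
         (\<forall>m'\<in>{1..M}. v m' n - b m' \<le> v (demand M v b n) n - b (demand M v b n)))"
proof (cases "\<exists>m\<in>{1..M}. v m n - b m \<ge> 0")
  case False
  then show ?thesis unfolding demand_def by auto
next
  case c: True
  then obtain m1 where m1: "m1 \<in> {1..M}" "v m1 n - b m1 \<ge> 0" by blast
  define F where "F = (\<lambda>m. v m n - b m) ` {1..M}"
  have fF: "finite F" "F \<noteq> {}" using m1 unfolding F_def by auto
  have "Max F \<in> F" using fF by (rule Max_in)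
  then obtain m0 where m0: "m0 \<in> {1..M}" "v m0 n - b m0 = Max F" unfolding F_def by auto
  have mx: "\<forall>m'\<in>{1..M}. v m' n - b m' \<le> v m0 n - b m0"
    using fF m0 unfolding F_def by auto
  have ex: "\<exists>m. m \<in> {1..M} \<and> (\<forall>m'\<in>{1..M}. v m' n - b m' \<le> v m n - b m)" using m0 mx by blast
  define d where "d = (SOME m. m \<in> {1..M} \<and> (\<forall>m'\<in>{1..M}. v m' n - b m' \<le> v m n - b m))"
  have d: "d \<in> {1..M} \<and> (\<forall>m'\<in>{1..M}. v m' n - b m' \<le> v d n - b d)"
    unfolding d_def by (rule someI_ex[OF ex])
  have dd: "demand M v b n = d" unfolding demand_def d_def using c by simp
  have "0 \<le> v d n - b d" using d m1 by force
  then show ?thesis unfolding dd using d by blast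
qed

lemma demand_nz:
  assumes "demand M v b n \<noteq> 0"
  shows "demand M v b n \<in> {1..M} \<and> 0 \<le> v (demand M v b n) n - b (demand M v b n) \<and>
         (\<forall>m'\<in>{1..M}. v m' n - b m' \<le> v (demand M v b n) n - b (demand M v b n))"
  using demand_cases[of M v b n] assms by blast

lemma demand_zero:
  assumes "demand M v b n = 0" "m \<in> {1..M}"
  shows "v m n - b m < 0"
  using demand_cases[of M v b n] assms by auto


definition edem :: "nat \<Rightarrow> (nat \<Rightarrow> nat \<Rightarrow> real) \<Rightarrow> real \<Rightarrow> (nat \<Rightarrow> real) \<Rightarrow> nat \<Rightarrow> nat \<Rightarrow> bool" where
  "edem M v eps b m j \<longleftrightarrow> 0 \<le> v m j - b m + eps \<and> (\<forall>m'\<in>{1..M}. v m' j - b m' \<le> v m j - b m + eps)"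

definition inv :: "nat \<Rightarrow> nat \<Rightarrow> (nat \<Rightarrow> nat \<Rightarrow> real) \<Rightarrow> real \<Rightarrow> dma_state \<Rightarrow> bool" where
  "inv M N v eps s \<longleftrightarrow>
  (\<forall>m\<in>{1..M}. dma_mu s m = 0 \<or> dma_mu s m \<in> {1..N}) \<and>
  (\<forall>m\<in>{1..M}. \<forall>m'\<in>{1..M}. dma_mu s m = dma_mu s m' \<longrightarrow> dma_mu s m \<noteq> 0 \<longrightarrow> m = m') \<and>
  (\<forall>m\<in>{1..M}. 0 \<le> dma_beta s m \<and> dma_beta s m - eps \<le> dma_bprev s m \<and> dma_bprev s m \<le> dma_beta s m \<and> 0 \<le> dma_bprev s m) \<and>
  (\<forall>m\<in>{1..M}. dma_mu s m \<noteq> 0 \<longrightarrow> 0 \<le> dma_price s m \<and> dma_beta s m - eps \<le> dma_price s m \<and>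
      dma_price s m \<le> dma_beta s m \<and> 0 \<le> v m (dma_mu s m) - dma_price s m \<and>
      (\<forall>m'\<in>{1..M}. v m' (dma_mu s m) - dma_beta s m' \<le> v m (dma_mu s m) - dma_price s m)) \<and>
  (\<forall>m k. dma_gprev s m k \<longrightarrow> m \<in> {1..M} \<and> k \<in> {1..N} \<and> 0 \<le> v m k - dma_bprev s m \<and>
      (\<forall>m'\<in>{1..M}. v m' k - dma_beta s m' \<le> v m k - dma_bprev s m) \<and> (d2d_unmatched M s k \<or> dma_mu s m = k)) \<and>
  (\<forall>m m' k. dma_gprev s m k \<longrightarrow> dma_gprev s m' k \<longrightarrow> m = m') \<and>
  (\<forall>m\<in>{1..M}. dma_mu s m = 0 \<longrightarrow> 0 < dma_beta s m \<longrightarrow> (\<exists>k. dma_gprev s m k)) \<and>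
  (\<forall>m\<in>{1..M}. dma_mu s m = 0 \<longrightarrow> (\<exists>k. dma_gprev s m k) \<longrightarrow> dma_beta s m = dma_bprev s m + eps) \<and>
  (\<forall>m m2 k x. dma_gprev s m2 k \<longrightarrow> dma_mu s m2 = 0 \<longrightarrow> dma_gprev s m x \<longrightarrow> dma_mu s m = 0 \<longrightarrow>
      v m k - dma_beta s m \<le> v m2 k - dma_beta s m2) \<and>
  (\<forall>S. S \<subseteq> {1..M} \<longrightarrow> S \<noteq> {} \<longrightarrow> (\<forall>m\<in>S. 0 < dma_beta s m) \<longrightarrow>
      card S + 1 \<le> card {j\<in>{1..N}. \<exists>m\<in>S. edem M v eps (dma_beta s) m j})"

lemma inv_init: "eps > 0 \<Longrightarrow> inv M N v eps dma_init"
  unfolding inv_def dma_init_def by auto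

locale stepctx =
  fixes M N :: nat and v :: "nat \<Rightarrow> nat \<Rightarrow> real" and eps :: real and s :: dma_state and sel :: "nat \<Rightarrow> nat"
  assumes epos: "eps > 0" and I: "inv M N v eps s" and NT: "no_ties M N v (dma_beta s)"
    and selok: "\<forall>m\<in>Aset M N v s. sel m \<in> {1..N} \<and> dma_gprev s m (sel m)"

context stepctx
begin

lemmas I' = I[unfolded inv_def]

abbreviation "A \<equiv> Aset M N v s"
abbreviation "s' \<equiv> step_res M N v eps s sel"
abbreviation "\<mu> \<equiv> dma_mu s"
abbreviation "\<beta> \<equiv> dma_beta s"
abbreviation "p \<equiv> dma_price s"
abbreviation "g2 \<equiv> G2 M N v s sel"
abbreviation "win \<equiv> Win M N v s sel"
abbreviation "lose \<equiv> Lose M N v s sel"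

lemma i1: "m \<in> {1..M} \<Longrightarrow> \<mu> m = 0 \<or> \<mu> m \<in> {1..N}" using conjunct1[OF I'] by blast
lemma i2: "m \<in> {1..M} \<Longrightarrow> m' \<in> {1..M} \<Longrightarrow> \<mu> m = \<mu> m' \<Longrightarrow> \<mu> m \<noteq> 0 \<Longrightarrow> m = m'" using conjunct1[OF conjunct2[OF I']] by blast
lemma i3: "m \<in> {1..M} \<Longrightarrow> 0 \<le> \<beta> m \<and> \<beta> m - eps \<le> dma_bprev s m \<and> dma_bprev s m \<le> \<beta> m \<and> 0 \<le> dma_bprev s m"
  using conjunct1[OF conjunct2[OF conjunct2[OF I']]] by blast
lemma i4: "m \<in> {1..M} \<Longrightarrow> \<mu> m \<noteq> 0 \<Longrightarrow> 0 \<le> p m \<and> \<beta> m - eps \<le> p m \<and>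
      p m \<le> \<beta> m \<and> 0 \<le> v m (\<mu> m) - p m \<and> (\<forall>m'\<in>{1..M}. v m' (\<mu> m) - \<beta> m' \<le> v m (\<mu> m) - p m)"
  using conjunct1[OF conjunct2[OF conjunct2[OF conjunct2[OF I']]]] by blast
lemma i5: "dma_gprev s m k \<Longrightarrow> m \<in> {1..M} \<and> k \<in> {1..N} \<and> 0 \<le> v m k - dma_bprev s m \<and>
      (\<forall>m'\<in>{1..M}. v m' k - \<beta> m' \<le> v m k - dma_bprev s m) \<and> (d2d_unmatched M s k \<or> \<mu> m = k)"
  using conjunct1[OF conjunct2[OF conjunct2[OF conjunct2[OF conjunct2[OF I']]]]] by blast
lemma i6: "dma_gprev s m k \<Longrightarrow> dma_gprev s m' k \<Longrightarrow> m = m'"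
  using conjunct1[OF conjunct2[OF conjunct2[OF conjunct2[OF conjunct2[OF conjunct2[OF I']]]]]] by blast
lemma i7: "m \<in> {1..M} \<Longrightarrow> \<mu> m = 0 \<Longrightarrow> 0 < \<beta> m \<Longrightarrow> \<exists>k. dma_gprev s m k"
  using conjunct1[OF conjunct2[OF conjunct2[OF conjunct2[OF conjunct2[OF conjunct2[OF conjunct2[OF I']]]]]]] by blast
lemma i10: "m \<in> {1..M} \<Longrightarrow> \<mu> m = 0 \<Longrightarrow> dma_gprev s m x \<Longrightarrow> \<beta> m = dma_bprev s m + eps"
  using conjunct1[OF conjunct2[OF conjunct2[OF conjunct2[OF conjunct2[OF conjunct2[OF conjunct2[OF conjunct2[OF I']]]]]]]] by blast
lemma i9: "dma_gprev s m2 k \<Longrightarrow> \<mu> m2 = 0 \<Longrightarrow> dma_gprev s m x \<Longrightarrow> \<mu> m = 0 \<Longrightarrow> v m k - \<beta> m \<le> v m2 k - \<beta> m2"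
  using conjunct1[OF conjunct2[OF conjunct2[OF conjunct2[OF conjunct2[OF conjunct2[OF conjunct2[OF conjunct2[OF conjunct2[OF I']]]]]]]]] by blast
lemma i8: "S \<subseteq> {1..M} \<Longrightarrow> S \<noteq> {} \<Longrightarrow> (\<forall>m\<in>S. 0 < \<beta> m) \<Longrightarrow>
      card S + 1 \<le> card {j\<in>{1..N}. \<exists>m\<in>S. edem M v eps \<beta> m j}"
  using conjunct2[OF conjunct2[OF conjunct2[OF conjunct2[OF conjunct2[OF conjunct2[OF conjunct2[OF conjunct2[OF conjunct2[OF I']]]]]]]]] by blast

lemma prop_props:
  assumes "proposals M N v s m k"
  shows "m \<in> {1..M} \<and> k \<in> {1..N} \<and> d2d_unmatched M s k \<and> demand M v \<beta> k = m \<and> 0 \<le> v m k - \<beta> m \<and>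
     (\<forall>m'\<in>{1..M}. v m' k - \<beta> m' \<le> v m k - \<beta> m)"
  using assms demand_nz[of M v \<beta> k] unfolding proposals_def by auto

lemma prop_unique: "proposals M N v s m k \<Longrightarrow> proposals M N v s m' k \<Longrightarrow> m = m'"
  unfolding proposals_def by auto

lemma prop_notA: "proposals M N v s m k \<Longrightarrow> m \<notin> A"
proof
  assume a: "proposals M N v s m k" "m \<in> A"
  have "k \<in> {1..N}" using prop_props[OF a(1)] by blast
  then have "k \<in> {n \<in> {1..N}. proposals M N v s m n}" using a(1) by blast
  moreover have "finite {n \<in> {1..N}. proposals M N v s m n}" by simp
  ultimately have "card {n \<in> {1..N}. proposals M N v s m n} \<noteq> 0" using card_0_eq by blast
  moreover have "card {n \<in> {1..N}. proposals M N v s m n} = 0" using a(2) unfolding Aset_def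
    by (simp only: mem_Collect_eq)
  ultimately show False by (rule notE)
qed

lemma g2_props: "g2 m k \<Longrightarrow> proposals M N v s m k \<and> k \<notin> sel ` A"
  unfolding G2_def by simp

lemma g2_card: "g2 m k \<Longrightarrow> card {n \<in> {1..N}. g2 m n} \<ge> 1"
proof -
  assume a: "g2 m k"
  have "k \<in> {1..N}" using prop_props[OF conjunct1[OF g2_props[OF a]]] by blast
  then have "k \<in> {n \<in> {1..N}. g2 m n}" using a by blast
  moreover have "finite {n \<in> {1..N}. g2 m n}" by simp
  ultimately have "card {n \<in> {1..N}. g2 m n} > 0" using card_gt_0_iff by blast
  then show ?thesis by linarith
qed

lemma g2_winlose: "g2 m k \<Longrightarrow> win m \<or> lose m"
  using g2_card[of m k] g2_props[of m k] prop_notA[of m k] prop_props[of m k]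
  unfolding Lose_def by blast

lemma win_single:
  assumes "win m"
  shows "\<exists>k. {n \<in> {1..N}. g2 m n} = {k} \<and> dma_mu s' m = k \<and> k \<in> {1..N} \<and> g2 m k"
proof -
  have c: "card {n \<in> {1..N}. g2 m n} = 1" using assms unfolding Win_def by simp
  then obtain k where k: "{n \<in> {1..N}. g2 m n} = {k}" by (rule card_1_singletonE)
  have mA: "m \<notin> A" using assms unfolding Win_def by simp
  have "(THE n. n \<in> {1..N} \<and> g2 m n) = k"
    using k by (intro the_equality) auto
  then have "dma_mu s' m = k" using mA assms by (simp add: step_res_simps)
  then show ?thesis using k by auto
qed

lemma win_notlose: "win m \<Longrightarrow> \<not> lose m" unfolding Lose_def by simp
lemma A_notwin: "m \<in> A \<Longrightarrow> \<not> win m" unfolding Win_def by simp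
lemma A_notlose: "m \<in> A \<Longrightarrow> \<not> lose m" unfolding Lose_def by simp

lemma mu'_cases:
  assumes "dma_mu s' m = k" "k \<noteq> 0"
  shows "(m \<in> A \<and> k = sel m) \<or> (win m \<and> k \<in> {1..N} \<and> g2 m k) \<or>
         (m \<notin> A \<and> \<not> win m \<and> \<not> lose m \<and> \<mu> m = k)"
proof (cases "m \<in> A")
  case True then show ?thesis using assms by (simp add: step_res_simps)
next
  case nA: False
  show ?thesis
  proof (cases "win m")
    case True
    then show ?thesis using win_single[of m] assms by auto
  next
    case False
    then show ?thesis using nA assms by (auto simp add: step_res_simps split: if_splits)
  qed
qed

lemma beta_mono: "\<beta> m \<le> dma_beta s' m"
  using epos by (simp add: step_res_simps)

end




context stepctx
begin

abbreviation "\<mu>' \<equiv> dma_mu s'"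
abbreviation "\<beta>' \<equiv> dma_beta s'"
abbreviation "p' \<equiv> dma_price s'"

lemma A_mem: "m \<in> A \<Longrightarrow> m \<in> {1..M} \<and> \<mu> m = 0 \<and> (\<forall>n. \<not> proposals M N v s m n) \<and> (\<exists>n\<in>{1..N}. dma_gprev s m n)"
proof -
  assume a: "m \<in> A"
  have "m \<in> {1..M} \<and> \<mu> m = 0 \<and> (\<exists>n\<in>{1..N}. dma_gprev s m n)" using a unfolding Aset_def by blast
  moreover have "\<forall>n. \<not> proposals M N v s m n" using prop_notA a by blast
  ultimately show ?thesis by blast
qed

lemma sel_props: "m \<in> A \<Longrightarrow> sel m \<in> {1..N} \<and> dma_gprev s m (sel m) \<and> d2d_unmatched M s (sel m)"
proof -
  assume a: "m \<in> A"
  have s1: "sel m \<in> {1..N}" "dma_gprev s m (sel m)" using selok a by auto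
  have "d2d_unmatched M s (sel m) \<or> \<mu> m = sel m" using i5[OF s1(2)] by blast
  moreover have "\<mu> m = 0" using A_mem[OF a] by blast
  ultimately show ?thesis using s1 by auto
qed

lemma notA_prop:
  assumes "m \<in> {1..M}" "\<mu> m = 0" "dma_gprev s m x" "m \<notin> A"
  shows "\<exists>n. proposals M N v s m n"
proof (rule ccontr)
  assume "\<not> (\<exists>n. proposals M N v s m n)"
  then have "{n \<in> {1..N}. proposals M N v s m n} = {}" by blast
  then have "card {n \<in> {1..N}. proposals M N v s m n} = 0" by (simp only: card.empty)
  moreover have "\<exists>n\<in>{1..N}. dma_gprev s m n" using assms(3) i5[OF assms(3)] by blast
  ultimately have "m \<in> A" using assms(1,2) unfolding Aset_def by blast
  then show False using assms(4) by blast
qed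

lemma gprev'_iff: "dma_gprev s' m k \<longleftrightarrow> g2 m k \<or> (lose m \<and> \<mu> m \<noteq> 0 \<and> k = \<mu> m \<and> p m = \<beta> m)"
  by (simp add: step_res_simps)

lemma lose_props: "lose m \<Longrightarrow> m \<in> {1..M} \<and> m \<notin> A \<and> \<not> win m \<and> \<mu>' m = 0 \<and> \<beta>' m = \<beta> m + eps \<and>
   card {n \<in> {1..N}. g2 m n} \<ge> 1"
  unfolding Lose_def by (simp add: step_res_simps Lose_def)

lemma nonlose_beta: "\<not> lose m \<Longrightarrow> \<beta>' m = \<beta> m"
  by (simp add: step_res_simps)

lemma win_props: "win m \<Longrightarrow> m \<in> {1..M} \<and> m \<notin> A \<and> \<not> lose m \<and> p' m = \<beta> m \<and> \<beta>' m = \<beta> m"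
  unfolding Win_def by (simp add: step_res_simps Lose_def Win_def)

lemma A_props: "m \<in> A \<Longrightarrow> \<mu>' m = sel m \<and> p' m = dma_bprev s m \<and> \<beta>' m = \<beta> m"
  using A_notlose[of m] by (simp add: step_res_simps)

lemma kept_props: "m \<notin> A \<Longrightarrow> \<not> win m \<Longrightarrow> \<not> lose m \<Longrightarrow> \<mu>' m = \<mu> m \<and> p' m = p m \<and> \<beta>' m = \<beta> m"
  by (simp add: step_res_simps)

lemma gprev'_mu0: "dma_gprev s' m k \<Longrightarrow> \<mu>' m = 0 \<Longrightarrow> lose m"
proof -
  assume a: "dma_gprev s' m k" "\<mu>' m = 0"
  show "lose m"
  proof (cases "g2 m k")
    case True
    then have "win m \<or> lose m" by (rule g2_winlose)
    moreover have "\<not> win m"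
    proof
      assume "win m"
      then obtain k' where "\<mu>' m = k'" "k' \<in> {1..N}" using win_single by blast
      then show False using a(2) by simp
    qed
    ultimately show ?thesis by blast
  next
    case False
    then show ?thesis using a(1) gprev'_iff by blast
  qed
qed

lemma lose_gprev_unmatched:
  assumes L: "lose m" and G: "dma_gprev s' m k"
  shows "d2d_unmatched M s' k"
  unfolding d2d_unmatched_def
proof
  fix m2 assume m2: "m2 \<in> {1..M}"
  show "\<mu>' m2 \<noteq> k"
  proof
    assume e: "\<mu>' m2 = k"
    have mM: "m \<in> {1..M}" "m \<notin> A" "\<not> win m" using lose_props[OF L] by auto
    have k0: "k \<noteq> 0"
    proof
      assume "k = 0"
      then have "g2 m 0 \<or> \<mu> m = 0 \<and> \<mu> m \<noteq> 0" using G gprev'_iff by auto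
      then show False using g2_props prop_props by fastforce
    qed
    consider (G2) "g2 m k" | (B) "\<mu> m \<noteq> 0" "k = \<mu> m" using G gprev'_iff by blast
    then show False
    proof cases
      case G2
      have pk: "proposals M N v s m k" "k \<notin> sel ` A" using g2_props[OF G2] by auto
      have um: "d2d_unmatched M s k" using prop_props[OF pk(1)] by blast
      from mu'_cases[OF e k0] show False
      proof (elim disjE conjE)
        assume "m2 \<in> A" "k = sel m2" then show False using pk(2) by blast
      next
        assume "win m2" "k \<in> {1..N}" "g2 m2 k"
        then have "m2 = m" using prop_unique pk(1) g2_props by blast
        then show False using \<open>win m2\<close> mM by blast
      next
        assume "\<mu> m2 = k" then show False using um m2 unfolding d2d_unmatched_def by blast
      qed
    next
      case B
      from mu'_cases[OF e k0] show False
      proof (elim disjE conjE)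
        assume a: "m2 \<in> A" "k = sel m2"
        have "dma_gprev s m2 k" using sel_props[OF a(1)] a(2) by simp
        then have "d2d_unmatched M s k \<or> \<mu> m2 = k" using i5 by blast
        then show False
        proof
          assume "d2d_unmatched M s k" then show False using B mM unfolding d2d_unmatched_def by blast
        next
          assume "\<mu> m2 = k"
          then have "m2 = m" using i2[OF m2 mM(1)] B by simp
          then show False using a(1) mM by blast
        qed
      next
        assume "win m2" "k \<in> {1..N}" "g2 m2 k"
        then have "d2d_unmatched M s k" using g2_props prop_props by blast
        then show False using B mM unfolding d2d_unmatched_def by blast
      next
        assume a: "m2 \<notin> A" "\<not> win m2" "\<not> lose m2" "\<mu> m2 = k"
        then have "m2 = m" using i2[OF m2 mM(1)] B by simp
        then show False using a L by blast
      qed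
    qed
  qed
qed


lemma n1: "m \<in> {1..M} \<Longrightarrow> \<mu>' m = 0 \<or> \<mu>' m \<in> {1..N}"
proof -
  assume m: "m \<in> {1..M}"
  show ?thesis
  proof (cases "\<mu>' m = 0")
    case False
    from mu'_cases[OF refl False] show ?thesis
    proof (elim disjE conjE)
      assume "m \<in> A" "\<mu>' m = sel m" then show ?thesis using sel_props by simp
    next
      assume "\<mu>' m \<in> {1..N}" then show ?thesis by simp
    next
      assume "\<mu> m = \<mu>' m" then show ?thesis using i1[OF m] by simp
    qed
  qed simp
qed

lemma n2:
  assumes m: "m \<in> {1..M}" and m2: "m2 \<in> {1..M}" and e: "\<mu>' m = \<mu>' m2" and nz: "\<mu>' m \<noteq> 0"
  shows "m = m2"
proof -
  define k where "k = \<mu>' m"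
  have e1: "\<mu>' m = k" and e2: "\<mu>' m2 = k" and k0: "k \<noteq> 0" using e nz k_def by auto
  note c1 = mu'_cases[OF e1 k0] and c2 = mu'_cases[OF e2 k0]
  show ?thesis
  proof (rule ccontr)
    assume ne: "m \<noteq> m2"
    from c1 show False
    proof (elim disjE conjE)
      assume a: "m \<in> A" "k = sel m"
      have g: "dma_gprev s m k" "d2d_unmatched M s k" using sel_props[OF a(1)] a(2) by auto
      from c2 show False
      proof (elim disjE conjE)
        assume b: "m2 \<in> A" "k = sel m2"
        have "dma_gprev s m2 k" using sel_props[OF b(1)] b(2) by simp
        then show False using i6 g ne by blast
      next
        assume "win m2" "k \<in> {1..N}" "g2 m2 k"
        then show False using g2_props a by blast
      next
        assume "\<mu> m2 = k" then show False using g(2) m2 unfolding d2d_unmatched_def by blast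
      qed
    next
      assume a: "win m" "k \<in> {1..N}" "g2 m k"
      have pk: "proposals M N v s m k" "k \<notin> sel ` A" using g2_props[OF a(3)] by auto
      from c2 show False
      proof (elim disjE conjE)
        assume b: "m2 \<in> A" "k = sel m2"
        then show False using pk(2) by blast
      next
        assume "win m2" "k \<in> {1..N}" "g2 m2 k"
        then show False using g2_props prop_unique pk(1) ne by blast
      next
        assume "\<mu> m2 = k" then show False using prop_props[OF pk(1)] m2 unfolding d2d_unmatched_def by blast
      qed
    next
      assume a: "m \<notin> A" "\<not> win m" "\<not> lose m" "\<mu> m = k"
      from c2 show False
      proof (elim disjE conjE)
        assume b: "m2 \<in> A" "k = sel m2"
        then show False using sel_props[OF b(1)] a(4) m unfolding d2d_unmatched_def by auto
      next
        assume "win m2" "k \<in> {1..N}" "g2 m2 k"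
        then show False using g2_props prop_props a(4) m unfolding d2d_unmatched_def by blast
      next
        assume "\<mu> m2 = k" then show False using i2[OF m m2] a(4) k0 ne by simp
      qed
    qed
  qed
qed

lemma n3: "m \<in> {1..M} \<Longrightarrow> 0 \<le> \<beta>' m \<and> \<beta>' m - eps \<le> dma_bprev s' m \<and> dma_bprev s' m \<le> \<beta>' m \<and> 0 \<le> dma_bprev s' m"
  using i3[of m] epos by (auto simp add: step_res_simps)

lemma bm_gen: "(\<forall>m'\<in>{1..M}. v m' k - \<beta> m' \<le> c) \<Longrightarrow> (\<forall>m'\<in>{1..M}. v m' k - \<beta>' m' \<le> c)"
proof (intro ballI)
  fix m' assume a: "\<forall>m'\<in>{1..M}. v m' k - \<beta> m' \<le> c" "m' \<in> {1..M}"
  have "\<beta> m' \<le> \<beta>' m'" by (rule beta_mono)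
  moreover have "v m' k - \<beta> m' \<le> c" using a by blast
  ultimately show "v m' k - \<beta>' m' \<le> c" by linarith
qed

lemma n4:
  assumes m: "m \<in> {1..M}" and nz: "\<mu>' m \<noteq> 0"
  shows "0 \<le> p' m \<and> \<beta>' m - eps \<le> p' m \<and>
      p' m \<le> \<beta>' m \<and> 0 \<le> v m (\<mu>' m) - p' m \<and> (\<forall>m'\<in>{1..M}. v m' (\<mu>' m) - \<beta>' m' \<le> v m (\<mu>' m) - p' m)"
proof -
  from mu'_cases[OF refl nz] show ?thesis
  proof (elim disjE conjE)
    assume a: "m \<in> A" "\<mu>' m = sel m"
    have g: "dma_gprev s m (sel m)" using sel_props[OF a(1)] by simp
    note h = i5[OF g]
    have ap: "p' m = dma_bprev s m" "\<beta>' m = \<beta> m" using A_props[OF a(1)] by auto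
    have x: "\<forall>m'\<in>{1..M}. v m' (sel m) - \<beta>' m' \<le> v m (sel m) - dma_bprev s m"
      using bm_gen h by blast
    show ?thesis unfolding a(2) ap using h i3[OF m] x by blast
  next
    assume a: "win m" "\<mu>' m \<in> {1..N}" "g2 m (\<mu>' m)"
    have pk: "proposals M N v s m (\<mu>' m)" using g2_props[OF a(3)] by simp
    note h = prop_props[OF pk]
    have ap: "p' m = \<beta> m" "\<beta>' m = \<beta> m" using win_props[OF a(1)] by auto
    have x: "\<forall>m'\<in>{1..M}. v m' (\<mu>' m) - \<beta>' m' \<le> v m (\<mu>' m) - \<beta> m"
      using bm_gen h by blast
    have y: "\<beta> m - eps \<le> \<beta> m" using epos by simp
    show ?thesis unfolding ap using h i3[OF m] x y by blast
  next
    assume a: "m \<notin> A" "\<not> win m" "\<not> lose m" "\<mu> m = \<mu>' m"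
    have ap: "p' m = p m" "\<beta>' m = \<beta> m" using kept_props[OF a(1-3)] by auto
    have "\<mu> m \<noteq> 0" using a(4) nz by simp
    note h = i4[OF m this]
    have x: "\<forall>m'\<in>{1..M}. v m' (\<mu> m) - \<beta>' m' \<le> v m (\<mu> m) - p m"
      using bm_gen h by blast
    show ?thesis unfolding ap a(4)[symmetric] using h x by blast
  qed
qed

lemma n5:
  assumes G: "dma_gprev s' m k"
  shows "m \<in> {1..M} \<and> k \<in> {1..N} \<and> 0 \<le> v m k - dma_bprev s' m \<and>
      (\<forall>m'\<in>{1..M}. v m' k - \<beta>' m' \<le> v m k - dma_bprev s' m) \<and> (d2d_unmatched M s' k \<or> \<mu>' m = k)"
proof -
  have bp: "dma_bprev s' m = \<beta> m" by (simp add: step_res_simps)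
  consider (G2) "g2 m k" | (B) "lose m" "\<mu> m \<noteq> 0" "k = \<mu> m" "p m = \<beta> m" using G gprev'_iff by blast
  then show ?thesis
  proof cases
    case G2
    have pk: "proposals M N v s m k" using g2_props[OF G2] by simp
    note h = prop_props[OF pk]
    have x: "\<forall>m'\<in>{1..M}. v m' k - \<beta>' m' \<le> v m k - \<beta> m" using bm_gen h by blast
    have u: "d2d_unmatched M s' k \<or> \<mu>' m = k"
    proof (cases "lose m")
      case True then show ?thesis using lose_gprev_unmatched G by blast
    next
      case False
      then have w: "win m" using g2_winlose[OF G2] by blast
      obtain k0 where k0: "{n \<in> {1..N}. g2 m n} = {k0}" "\<mu>' m = k0" using win_single[OF w] by blast
      have "k \<in> {n \<in> {1..N}. g2 m n}" using G2 h by blast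
      then have "k \<in> {k0}" unfolding k0(1) .
      then have "k = k0" by simp
      then show ?thesis using k0(2) by simp
    qed
    show ?thesis unfolding bp using h x u by blast
  next
    case B
    have mM: "m \<in> {1..M}" using lose_props[OF B(1)] by blast
    have kN: "k \<in> {1..N}" using i1[OF mM] B by auto
    note h = i4[OF mM B(2)]
    have x: "\<forall>m'\<in>{1..M}. v m' k - \<beta>' m' \<le> v m k - \<beta> m" using bm_gen h B by auto
    have u: "d2d_unmatched M s' k" using lose_gprev_unmatched[OF B(1) G] .
    have "0 \<le> v m k - \<beta> m" using h B by simp
    then show ?thesis unfolding bp using mM kN x u by blast
  qed
qed

lemma n6:
  assumes G1: "dma_gprev s' m k" and G2': "dma_gprev s' m2 k"
  shows "m = m2"
proof -
  have mM: "m \<in> {1..M}" "m2 \<in> {1..M}" using n5[OF G1] n5[OF G2'] by auto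
  consider (G2) "g2 m k" | (B) "lose m" "\<mu> m \<noteq> 0" "k = \<mu> m" "p m = \<beta> m" using G1 gprev'_iff by blast
  then show ?thesis
  proof cases
    case G2
    have pk: "proposals M N v s m k" using g2_props[OF G2] by simp
    consider (G2b) "g2 m2 k" | (Bb) "lose m2" "\<mu> m2 \<noteq> 0" "k = \<mu> m2" "p m2 = \<beta> m2" using G2' gprev'_iff by blast
    then show ?thesis
    proof cases
      case G2b then show ?thesis using g2_props prop_unique pk by blast
    next
      case Bb then show ?thesis using prop_props[OF pk] mM unfolding d2d_unmatched_def by auto
    qed
  next
    case B
    consider (G2b) "g2 m2 k" | (Bb) "lose m2" "\<mu> m2 \<noteq> 0" "k = \<mu> m2" "p m2 = \<beta> m2" using G2' gprev'_iff by blast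
    then show ?thesis
    proof cases
      case G2b then show ?thesis using g2_props prop_props B mM unfolding d2d_unmatched_def by blast
    next
      case Bb then show ?thesis using i2[OF mM] B by simp
    qed
  qed
qed

lemma n10: "m \<in> {1..M} \<Longrightarrow> \<mu>' m = 0 \<Longrightarrow> dma_gprev s' m x \<Longrightarrow> \<beta>' m = dma_bprev s' m + eps"
proof -
  assume a: "m \<in> {1..M}" "\<mu>' m = 0" "dma_gprev s' m x"
  have "lose m" using gprev'_mu0 a by blast
  then show ?thesis using lose_props by (simp add: step_res_simps)
qed

lemma gp_max:
  assumes G: "dma_gprev s' m2 k" and m: "m \<in> {1..M}"
  shows "v m k - \<beta> m \<le> v m2 k - \<beta> m2"
proof -
  consider (G2) "g2 m2 k" | (B) "lose m2" "\<mu> m2 \<noteq> 0" "k = \<mu> m2" "p m2 = \<beta> m2" using G gprev'_iff by blast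
  then show ?thesis
  proof cases
    case G2 then show ?thesis using g2_props prop_props m by blast
  next
    case B
    have mM: "m2 \<in> {1..M}" using lose_props[OF B(1)] by blast
    show ?thesis using i4[OF mM B(2)] B m by auto
  qed
qed

lemma n9:
  assumes "dma_gprev s' m2 k" "\<mu>' m2 = 0" "dma_gprev s' m x" "\<mu>' m = 0"
  shows "v m k - \<beta>' m \<le> v m2 k - \<beta>' m2"
proof -
  have l: "lose m" "lose m2" using gprev'_mu0 assms by blast+
  have m: "m \<in> {1..M}" using n5[OF assms(3)] by blast
  have "v m k - \<beta> m \<le> v m2 k - \<beta> m2" using gp_max[OF assms(1) m] .
  then show ?thesis using lose_props[OF l(1)] lose_props[OF l(2)] by simp
qed

lemma nonloser_matched:
  assumes m: "m \<in> {1..M}" and bp: "0 < \<beta> m" and nl: "\<not> lose m"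
  shows "\<mu>' m \<noteq> 0"
proof (cases "m \<in> A")
  case True
  have "\<mu>' m = sel m" "sel m \<in> {1..N}" using A_props[OF True] sel_props[OF True] by auto
  then show ?thesis by simp
next
  case nA: False
  show ?thesis
  proof (cases "win m")
    case True then show ?thesis using win_single by fastforce
  next
    case nW: False
    have e: "\<mu>' m = \<mu> m" using kept_props[OF nA nW nl] by simp
    show ?thesis
    proof (cases "\<mu> m = 0")
      case False then show ?thesis using e by simp
    next
      case z: True
      obtain x where x: "dma_gprev s m x" using i7[OF m z bp] by blast
      obtain n where pn: "proposals M N v s m n" using notA_prop[OF m z x nA] by blast
      show ?thesis
      proof (cases "g2 m n")
        case True then show ?thesis using g2_winlose nW nl by blast
      next
        case False
        then have "n \<in> sel ` A" using pn unfolding G2_def by blast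
        then obtain m2 where m2: "m2 \<in> A" "n = sel m2" by blast
        have g: "dma_gprev s m2 n" using sel_props[OF m2(1)] m2(2) by simp
        have z2: "\<mu> m2 = 0" "m2 \<in> {1..M}" using A_mem[OF m2(1)] by auto
        have le: "v m n - \<beta> m \<le> v m2 n - \<beta> m2" using i9[OF g z2(1) x z] .
        note h = prop_props[OF pn]
        have mx2: "\<forall>k\<in>{1..M}. v k n - \<beta> k \<le> v m2 n - \<beta> m2" using h le by force
        have "m = m2" using NT h z2(2) mx2 unfolding no_ties_def by blast
        then show ?thesis using m2(1) nA by blast
      qed
    qed
  qed
qed

lemma n7: "m \<in> {1..M} \<Longrightarrow> \<mu>' m = 0 \<Longrightarrow> 0 < \<beta>' m \<Longrightarrow> \<exists>k. dma_gprev s' m k"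
proof -
  assume a: "m \<in> {1..M}" "\<mu>' m = 0" "0 < \<beta>' m"
  show ?thesis
  proof (cases "lose m")
    case True
    then have "card {n \<in> {1..N}. g2 m n} \<ge> 1" using lose_props by blast
    then have "{n \<in> {1..N}. g2 m n} \<noteq> {}" by (metis card.empty not_one_le_zero)
    then obtain k where "g2 m k" by blast
    then show ?thesis using gprev'_iff by blast
  next
    case False
    then have "0 < \<beta> m" using a(3) nonlose_beta by simp
    then show ?thesis using nonloser_matched[OF a(1) _ False] a(2) by blast
  qed
qed

lemma gp'_fin: "finite {k. dma_gprev s' m k}"
proof -
  have "{k. dma_gprev s' m k} \<subseteq> {1..N}" using n5 by blast
  then show ?thesis using finite_subset by blast
qed

lemma lose_card2:
  assumes L: "lose m"
  shows "2 \<le> card {k. dma_gprev s' m k}"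
proof -
  define C where "C = {n \<in> {1..N}. g2 m n}"
  have c1: "card C \<ge> 1" using lose_props[OF L] C_def by blast
  have sub: "C \<subseteq> {k. dma_gprev s' m k}" unfolding C_def using gprev'_iff by blast
  show ?thesis
  proof (cases "card C \<ge> 2")
    case True
    then show ?thesis using card_mono[OF gp'_fin sub] by linarith
  next
    case False
    then have "card C = 1" using c1 by linarith
    then obtain k0 where k0: "C = {k0}" by (rule card_1_singletonE)
    have mM: "m \<in> {1..M}" "m \<notin> A" "\<not> win m" using lose_props[OF L] by auto
    have "\<not> (\<mu> m = 0 \<or> p m < \<beta> m)" using mM \<open>card C = 1\<close> unfolding Win_def C_def by blast
    then have mu: "\<mu> m \<noteq> 0" "\<beta> m \<le> p m" by auto
    have "p m \<le> \<beta> m" using i4[OF mM(1) mu(1)] by blast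
    then have "p m = \<beta> m" using mu by linarith
    then have b: "\<mu> m \<in> {k. dma_gprev s' m k}" using gprev'_iff L mu by blast
    have gk0: "g2 m k0" using k0 C_def by blast
    have "d2d_unmatched M s k0" using g2_props[OF gk0] prop_props by blast
    then have ne: "k0 \<noteq> \<mu> m" using mM(1) unfolding d2d_unmatched_def by blast
    have "{k0, \<mu> m} \<subseteq> {k. dma_gprev s' m k}" using b sub k0 by blast
    moreover have "card {k0, \<mu> m} = 2" using ne by simp
    ultimately show ?thesis using card_mono[OF gp'_fin] by metis
  qed
qed

lemma n8:
  assumes S: "S \<subseteq> {1..M}" "S \<noteq> {}" "\<forall>m\<in>S. 0 < \<beta>' m"
  shows "card S + 1 \<le> card {j\<in>{1..N}. \<exists>m\<in>S. edem M v eps \<beta>' m j}"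
proof -
  define G' where "G' = {j\<in>{1..N}. \<exists>m\<in>S. edem M v eps \<beta>' m j}"
  have finG': "finite G'" unfolding G'_def by simp
  have finS: "finite S" using S(1) finite_subset by blast
  define K where "K = {m\<in>S. lose m}"
  define R where "R = S - K"
  show ?thesis
  proof (cases "K = {}")
    case True
    then have nl: "\<forall>m\<in>S. \<not> lose m" unfolding K_def by blast
    then have bS: "\<forall>m\<in>S. \<beta>' m = \<beta> m" using nonlose_beta by blast
    then have "\<forall>m\<in>S. 0 < \<beta> m" using S(3) by simp
    then have old: "card S + 1 \<le> card {j\<in>{1..N}. \<exists>m\<in>S. edem M v eps \<beta> m j}" using i8 S(1,2) by blast
    have "{j\<in>{1..N}. \<exists>m\<in>S. edem M v eps \<beta> m j} \<subseteq> G'"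
    proof
      fix j assume "j \<in> {j\<in>{1..N}. \<exists>m\<in>S. edem M v eps \<beta> m j}"
      then obtain m where j: "j \<in> {1..N}" "m \<in> S" "edem M v eps \<beta> m j" by blast
      have e: "\<beta>' m = \<beta> m" using bS j(2) by blast
      have "edem M v eps \<beta>' m j"
        unfolding edem_def e using j(3) bm_gen[of j "v m j - \<beta> m + eps"] unfolding edem_def by blast
      then show "j \<in> G'" unfolding G'_def using j by blast
    qed
    then have "card {j\<in>{1..N}. \<exists>m\<in>S. edem M v eps \<beta> m j} \<le> card G'" using card_mono finG' by blast
    then show ?thesis using old unfolding G'_def by linarith
  next
    case Kne: False
    define Q where "Q = \<mu>' ` R"
    define P where "P = (\<Union>m\<in>K. {k. dma_gprev s' m k})"
    have RS: "R \<subseteq> {1..M}" unfolding R_def using S(1) by blast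
    have KS: "K \<subseteq> S" unfolding K_def by blast
    have finK: "finite K" using finS KS finite_subset by blast
    have finR: "finite R" using finS unfolding R_def by blast
    have Rm: "\<mu>' m \<noteq> 0" if "m \<in> R" for m
    proof -
      have m: "m \<in> {1..M}" "\<not> lose m" "m \<in> S" using that RS unfolding R_def K_def by auto
      have "0 < \<beta> m" using S(3) m nonlose_beta by fastforce
      then show ?thesis using nonloser_matched m by blast
    qed
    have QG: "Q \<subseteq> G'"
    proof
      fix j assume "j \<in> Q"
      then obtain m where m: "m \<in> R" "j = \<mu>' m" unfolding Q_def by blast
      have mM: "m \<in> {1..M}" "m \<in> S" using m RS unfolding R_def by auto
      have nz: "\<mu>' m \<noteq> 0" using Rm m(1) .
      have jN: "j \<in> {1..N}" using n1[OF mM(1)] nz m(2) by simp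
      note h = n4[OF mM(1) nz]
      have e1: "0 \<le> v m j - \<beta>' m + eps" using h m(2) by simp
      have e2: "\<forall>m'\<in>{1..M}. v m' j - \<beta>' m' \<le> v m j - \<beta>' m + eps"
      proof
        fix m' assume "m' \<in> {1..M}"
        then have "v m' j - \<beta>' m' \<le> v m j - p' m" using h m(2) by blast
        then show "v m' j - \<beta>' m' \<le> v m j - \<beta>' m + eps" using h by linarith
      qed
      have "edem M v eps \<beta>' m j" unfolding edem_def using e1 e2 by blast
      then show "j \<in> G'" unfolding G'_def using jN mM by blast
    qed
    have PG: "P \<subseteq> G'"
    proof
      fix k assume "k \<in> P"
      then obtain m where m: "m \<in> K" "dma_gprev s' m k" unfolding P_def by blast
      have L: "lose m" "m \<in> S" using m(1) unfolding K_def by auto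
      note h = n5[OF m(2)]
      have bp: "dma_bprev s' m = \<beta> m" by (simp add: step_res_simps)
      have bb: "\<beta>' m = \<beta> m + eps" using lose_props[OF L(1)] by blast
      have "edem M v eps \<beta>' m k" unfolding edem_def using h bp bb by simp
      then show "k \<in> G'" unfolding G'_def using h L by blast
    qed
    have cQ: "card Q = card R"
    proof -
      have "inj_on \<mu>' R"
      proof (rule inj_onI)
        fix x y assume "x \<in> R" "y \<in> R" "\<mu>' x = \<mu>' y"
        then show "x = y" using n2 RS Rm by blast
      qed
      then show ?thesis unfolding Q_def by (rule card_image)
    qed
    have disj: "Q \<inter> P = {}"
    proof (rule ccontr)
      assume "Q \<inter> P \<noteq> {}"
      then obtain k where k: "k \<in> Q" "k \<in> P" by blast
      then obtain m where m: "m \<in> K" "dma_gprev s' m k" unfolding P_def by blast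
      have L: "lose m" using m(1) unfolding K_def by blast
      have u: "d2d_unmatched M s' k" using lose_gprev_unmatched[OF L m(2)] .
      obtain m2 where m2: "m2 \<in> R" "k = \<mu>' m2" using k(1) unfolding Q_def by blast
      show False using u m2 RS unfolding d2d_unmatched_def by blast
    qed
    have finP: "finite P" unfolding P_def using finK gp'_fin by blast
    have finQ: "finite Q" unfolding Q_def using finR by blast
    have cP: "card P = (\<Sum>m\<in>K. card {k. dma_gprev s' m k})"
      unfolding P_def
    proof (rule card_UN_disjoint[OF finK])
      show "\<forall>i\<in>K. finite {k. dma_gprev s' i k}" using gp'_fin by blast
      show "\<forall>i\<in>K. \<forall>j\<in>K. i \<noteq> j \<longrightarrow> {k. dma_gprev s' i k} \<inter> {k. dma_gprev s' j k} = {}"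
        using n6 by blast
    qed
    have "(\<Sum>m\<in>K. (2::nat)) \<le> (\<Sum>m\<in>K. card {k. dma_gprev s' m k})"
    proof (rule sum_mono)
      fix m assume "m \<in> K"
      then have "lose m" unfolding K_def by blast
      then show "2 \<le> card {k. dma_gprev s' m k}" by (rule lose_card2)
    qed
    then have cP2: "2 * card K \<le> card P" using cP by simp
    have cQP: "card (Q \<union> P) = card Q + card P" using card_Un_disjoint[OF finQ finP disj] .
    have cS: "card S = card R + card K"
    proof -
      have "S = R \<union> K" "R \<inter> K = {}" unfolding R_def using KS by auto
      then show ?thesis using card_Un_disjoint finR finK by metis
    qed
    have K1: "card K \<ge> 1" using Kne finK by (simp add: Suc_leI card_gt_0_iff)
    have "card (Q \<union> P) \<le> card G'" using card_mono[OF finG'] QG PG by blast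
    then show ?thesis unfolding G'_def[symmetric] using cQP cQ cP2 cS K1 by linarith
  qed
qed

lemma inv_step: "inv M N v eps s'"
  unfolding inv_def
  apply (intro conjI)
  subgoal using n1 by blast
  subgoal using n2 by blast
  subgoal using n3 by blast
  subgoal using n4 by blast
  subgoal using n5 by blast
  subgoal using n6 by blast
  subgoal using n7 by blast
  subgoal using n10 by blast
  subgoal using n9 by blast
  subgoal using n8 by blast
  done

end




lemma reach_inv:
  assumes R: "dma_reach M N v eps s" and epos: "eps > 0"
    and NT: "\<And>s'. dma_reach M N v eps s' \<Longrightarrow> no_ties M N v (dma_beta s')"
  shows "inv M N v eps s"
  using R
proof (induction rule: dma_reach.induct)
  case init
  then show ?case using inv_init[OF epos] .
next
  case (step s s')
  obtain sel where sel: "\<forall>m\<in>Aset M N v s. sel m \<in> {1..N} \<and> dma_gprev s m (sel m)"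
    and e: "s' = step_res M N v eps s sel" using step.hyps(3) iter_unfold by blast
  have ctx: "stepctx M N v eps s sel"
    using epos step.IH NT[OF step.hyps(1)] sel by (intro stepctx.intro) auto
  show ?case unfolding e using stepctx.inv_step[OF ctx] .
qed

context stepctx
begin

lemma noprop_g2: "\<not> has_proposal M N v s \<Longrightarrow> \<not> g2 m k"
  unfolding has_proposal_def G2_def by blast

lemma noprop_nolose: "\<not> has_proposal M N v s \<Longrightarrow> \<not> lose m"
proof
  assume a: "\<not> has_proposal M N v s" "lose m"
  have "card {n \<in> {1..N}. g2 m n} \<ge> 1" using lose_props[OF a(2)] by blast
  then have "{n \<in> {1..N}. g2 m n} \<noteq> {}" by (metis card.empty not_one_le_zero)
  then show False using noprop_g2[OF a(1)] by blast
qed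

lemma noprop_nowin: "\<not> has_proposal M N v s \<Longrightarrow> \<not> win m"
proof
  assume a: "\<not> has_proposal M N v s" "win m"
  obtain k where "g2 m k" using win_single[OF a(2)] by blast
  then show False using noprop_g2[OF a(1)] by blast
qed

lemma noprop_gprev: "\<not> has_proposal M N v s \<Longrightarrow> \<not> dma_gprev s' m k"
  using noprop_g2 noprop_nolose gprev'_iff by blast

lemma noprop_beta: "\<not> has_proposal M N v s \<Longrightarrow> \<beta>' = \<beta>"
  using noprop_nolose nonlose_beta by blast

lemma noprop_pos: "\<not> has_proposal M N v s \<Longrightarrow> m \<in> {1..M} \<Longrightarrow> 0 < \<beta>' m \<Longrightarrow> \<mu>' m \<noteq> 0"
  using n7 noprop_gprev by blast

lemma noprop_unm:
  assumes np: "\<not> has_proposal M N v s" and k: "k \<in> {1..N}" and u: "d2d_unmatched M s' k" and m: "m \<in> {1..M}"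
  shows "v m k - \<beta>' m < 0"
proof -
  have us: "d2d_unmatched M s k"
    unfolding d2d_unmatched_def
  proof
    fix m2 assume m2: "m2 \<in> {1..M}"
    show "\<mu> m2 \<noteq> k"
    proof
      assume e: "\<mu> m2 = k"
      have "m2 \<notin> A" using A_mem e k by auto
      then have "\<mu>' m2 = \<mu> m2" using kept_props noprop_nowin[OF np] noprop_nolose[OF np] by blast
      then show False using u m2 e unfolding d2d_unmatched_def by blast
    qed
  qed
  have "demand M v \<beta> k = 0"
  proof (rule ccontr)
    assume "demand M v \<beta> k \<noteq> 0"
    then have "proposals M N v s (demand M v \<beta> k) k" unfolding proposals_def using k us by blast
    then show False using np unfolding has_proposal_def by blast
  qed
  then have "v m k - \<beta> m < 0" using demand_zero m by blast
  then show ?thesis using noprop_beta[OF np] by simp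
qed

end




definition matching :: "(nat \<times> nat) set \<Rightarrow> bool" where
  "matching X \<longleftrightarrow> (\<forall>(m,n)\<in>X. \<forall>(m',n')\<in>X. (m = m' \<longleftrightarrow> n = n'))"

lemma Vopt_eq: "Vopt v M1 N1 = Max {(\<Sum>(m,n)\<in>X. v m n) | X. X \<subseteq> M1 \<times> N1 \<and> matching X}"
  unfolding Vopt_def matching_def by simp

lemma Vopt_set_fin:
  assumes "finite M1" "finite N1"
  shows "finite {(\<Sum>(m,n)\<in>X. v m n) | X. X \<subseteq> M1 \<times> N1 \<and> matching X} \<and>
         {(\<Sum>(m,n)\<in>X. v m n) | X. X \<subseteq> M1 \<times> N1 \<and> matching X} \<noteq> {}"
proof -
  have e: "{(\<Sum>(m,n)\<in>X. v m n) | X. X \<subseteq> M1 \<times> N1 \<and> matching X} =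
      (\<lambda>X. \<Sum>(m,n)\<in>X. v m n) ` {X. X \<subseteq> M1 \<times> N1 \<and> matching X}" by blast
  have "{X. X \<subseteq> M1 \<times> N1 \<and> matching X} \<subseteq> Pow (M1 \<times> N1)" by blast
  then have "finite {X. X \<subseteq> M1 \<times> N1 \<and> matching X}" using assms finite_subset by blast
  moreover have "{} \<in> {X. X \<subseteq> M1 \<times> N1 \<and> matching X}" unfolding matching_def by blast
  ultimately show ?thesis unfolding e by blast
qed

lemma Vopt_ge:
  assumes "finite M1" "finite N1" "X \<subseteq> M1 \<times> N1" "matching X"
  shows "(\<Sum>(m,n)\<in>X. v m n) \<le> Vopt v M1 N1"
  unfolding Vopt_eq using Vopt_set_fin[OF assms(1,2)] assms(3,4) by (intro Max_ge) blast+

lemma Vopt_le: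
  assumes "finite M1" "finite N1" "\<And>X. X \<subseteq> M1 \<times> N1 \<Longrightarrow> matching X \<Longrightarrow> (\<Sum>(m,n)\<in>X. v m n) \<le> B"
  shows "Vopt v M1 N1 \<le> B"
  unfolding Vopt_eq using Vopt_set_fin[OF assms(1,2), of v] assms(3) by (subst Max_le_iff) blast+

lemma matching_inj:
  assumes "matching X"
  shows "inj_on fst X" "inj_on snd X"
  using assms unfolding matching_def inj_on_def by fastforce+

lemma matching_card:
  assumes "matching X" "X \<subseteq> C \<times> B" "finite C" "finite B"
  shows "card X \<le> card C \<and> card X \<le> card B"
proof -
  have "card X = card (fst ` X)" using card_image[OF matching_inj(1)[OF assms(1)]] by simp
  moreover have "card (fst ` X) \<le> card C" using assms(2,3) by (intro card_mono) auto
  moreover have "card X = card (snd ` X)" using card_image[OF matching_inj(2)[OF assms(1)]] by simp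
  moreover have "card (snd ` X) \<le> card B" using assms(2,4) by (intro card_mono) auto
  ultimately show ?thesis by linarith
qed

lemma weak_dual:
  fixes v :: "nat \<Rightarrow> nat \<Rightarrow> real" and u q :: "nat \<Rightarrow> real"
  assumes X: "X \<subseteq> C \<times> B" "matching X" and fin: "finite C" "finite B"
    and d: "\<And>m k. m \<in> C \<Longrightarrow> k \<in> B \<Longrightarrow> v m k \<le> u k + q m + e"
    and un: "\<forall>k\<in>B. 0 \<le> u k" and qn: "\<forall>m\<in>C. 0 \<le> q m"
  shows "(\<Sum>(m,k)\<in>X. v m k) \<le> sum u B + sum q C + real (card X) * e"
proof -
  have finX: "finite X" using X(1) fin finite_subset by blast
  have "(\<Sum>(m,k)\<in>X. v m k) = (\<Sum>x\<in>X. v (fst x) (snd x))" by (simp add: case_prod_beta)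
  also have "\<dots> \<le> (\<Sum>x\<in>X. u (snd x) + q (fst x) + e)"
    using X(1) d by (intro sum_mono) auto
  also have "\<dots> = (\<Sum>x\<in>X. u (snd x)) + (\<Sum>x\<in>X. q (fst x)) + real (card X) * e"
    by (simp add: sum.distrib)
  also have "(\<Sum>x\<in>X. u (snd x)) = sum u (snd ` X)"
    using sum.reindex[OF matching_inj(2)[OF X(2)], of u] by simp
  also have "(\<Sum>x\<in>X. q (fst x)) = sum q (fst ` X)"
    using sum.reindex[OF matching_inj(1)[OF X(2)], of q] by simp
  also have "sum u (snd ` X) \<le> sum u B"
    using X(1) fin un by (intro sum_mono2) auto
  also have "sum q (fst ` X) \<le> sum q C"
    using X(1) fin qn by (intro sum_mono2) auto
  finally show ?thesis by simp
qed

definition Wf :: "nat \<Rightarrow> (nat \<Rightarrow> nat \<Rightarrow> real) \<Rightarrow> (nat \<Rightarrow> real) \<Rightarrow> nat \<Rightarrow> real" where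
  "Wf M v b j = Max (insert 0 ((\<lambda>m. v m j - b m) ` {1..M}))"

lemma Wf_ge0: "0 \<le> Wf M v b j"
  unfolding Wf_def by (rule Max_ge) auto

lemma Wf_ge: "m \<in> {1..M} \<Longrightarrow> v m j - b m \<le> Wf M v b j"
  unfolding Wf_def by (rule Max_ge) auto

lemma Wf_edem: "edem M v eps b m j \<Longrightarrow> Wf M v b j \<le> v m j - b m + eps"
  unfolding Wf_def edem_def by (subst Max_le_iff) auto

locale finctx =
  fixes M N :: nat and v :: "nat \<Rightarrow> nat \<Rightarrow> real" and eps :: real and s :: dma_state and n :: nat
  assumes epos: "eps > 0" and I: "inv M N v eps s"
   and pos: "\<forall>m\<in>{1..M}. 0 < dma_beta s m \<longrightarrow> dma_mu s m \<noteq> 0"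
   and unm: "\<forall>k\<in>{1..N}. d2d_unmatched M s k \<longrightarrow> (\<forall>m\<in>{1..M}. v m k - dma_beta s m < 0)"
   and nN: "n \<in> {1..N}"
begin

abbreviation "mu \<equiv> dma_mu s"
abbreviation "be \<equiv> dma_beta s"
abbreviation "pr \<equiv> dma_price s"

lemmas I' = I[unfolded inv_def]
lemma f1: "m \<in> {1..M} \<Longrightarrow> mu m = 0 \<or> mu m \<in> {1..N}" using conjunct1[OF I'] by blast
lemma f2: "m \<in> {1..M} \<Longrightarrow> m' \<in> {1..M} \<Longrightarrow> mu m = mu m' \<Longrightarrow> mu m \<noteq> 0 \<Longrightarrow> m = m'"
  using conjunct1[OF conjunct2[OF I']] by blast
lemma f3: "m \<in> {1..M} \<Longrightarrow> 0 \<le> be m"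
  using conjunct1[OF conjunct2[OF conjunct2[OF I']]] by blast
lemma f4: "m \<in> {1..M} \<Longrightarrow> mu m \<noteq> 0 \<Longrightarrow> 0 \<le> pr m \<and> be m - eps \<le> pr m \<and>
      pr m \<le> be m \<and> 0 \<le> v m (mu m) - pr m \<and> (\<forall>m'\<in>{1..M}. v m' (mu m) - be m' \<le> v m (mu m) - pr m)"
  using conjunct1[OF conjunct2[OF conjunct2[OF conjunct2[OF I']]]] by blast
lemma f8: "S \<subseteq> {1..M} \<Longrightarrow> S \<noteq> {} \<Longrightarrow> (\<forall>m\<in>S. 0 < be m) \<Longrightarrow>
      card S + 1 \<le> card {j\<in>{1..N}. \<exists>m\<in>S. edem M v eps be m j}"
  using conjunct2[OF conjunct2[OF conjunct2[OF conjunct2[OF conjunct2[OF conjunct2[OF conjunct2[OF conjunct2[OF conjunct2[OF I']]]]]]]]] by blast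

definition "Mt = {m\<in>{1..M}. mu m \<noteq> 0}"
definition "u k = dma_delta M v s k"
definition "q m = (if mu m \<noteq> 0 then pr m else 0)"
definition "valmu = (\<Sum>m\<in>Mt. v m (mu m))"

lemma finMt: "finite Mt" unfolding Mt_def by simp

lemma u_match: "m \<in> {1..M} \<Longrightarrow> mu m \<noteq> 0 \<Longrightarrow> u (mu m) = v m (mu m) - pr m"
proof -
  assume m: "m \<in> {1..M}" "mu m \<noteq> 0"
  have ex: "\<exists>m'\<in>{1..M}. mu m' = mu m" using m by blast
  define m' where "m' = (SOME m'. m' \<in> {1..M} \<and> mu m' = mu m)"
  have m': "m' \<in> {1..M} \<and> mu m' = mu m" unfolding m'_def by (rule someI_ex) (use m in blast)
  have "m' = m" using f2 m m' by metis
  then show ?thesis unfolding u_def dma_delta_def using ex m'_def by (simp add: Let_def)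
qed

lemma u_unm: "\<not> (\<exists>m\<in>{1..M}. mu m = k) \<Longrightarrow> u k = 0"
  unfolding u_def dma_delta_def by simp

lemma u_nonneg: "k \<in> {1..N} \<Longrightarrow> 0 \<le> u k"
proof (cases "\<exists>m\<in>{1..M}. mu m = k")
  case True
  assume k: "k \<in> {1..N}"
  then obtain m where m: "m \<in> {1..M}" "mu m = k" using True by blast
  have nz: "mu m \<noteq> 0" using m k by simp
  show ?thesis using u_match[OF m(1) nz] f4[OF m(1) nz] m(2) by simp
next
  case False then show ?thesis using u_unm by simp
qed

lemma u_ge:
  assumes m: "m \<in> {1..M}" and k: "k \<in> {1..N}"
  shows "v m k - be m \<le> u k"
proof (cases "\<exists>m\<in>{1..M}. mu m = k")
  case True
  then obtain m0 where m0: "m0 \<in> {1..M}" "mu m0 = k" by blast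
  have nz: "mu m0 \<noteq> 0" using m0 k by simp
  show ?thesis using u_match[OF m0(1) nz] f4[OF m0(1) nz] m0(2) m by simp
next
  case False
  then have "d2d_unmatched M s k" unfolding d2d_unmatched_def by blast
  then have "v m k - be m < 0" using unm k m by blast
  then show ?thesis using u_unm False by simp
qed

lemma q_props:
  assumes m: "m \<in> {1..M}"
  shows "0 \<le> q m \<and> be m - eps \<le> q m \<and> q m \<le> be m"
proof (cases "mu m = 0")
  case True
  then have "\<not> 0 < be m" using pos m by blast
  then have "be m = 0" using f3[OF m] by simp
  then show ?thesis using True epos unfolding q_def by simp
next
  case False
  then show ?thesis using f4[OF m False] unfolding q_def by simp
qed

lemma dual: "m \<in> {1..M} \<Longrightarrow> k \<in> {1..N} \<Longrightarrow> v m k \<le> u k + q m + eps"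
  using u_ge q_props by fastforce

lemma inj_mu: "inj_on mu Mt"
  unfolding Mt_def by (rule inj_onI) (use f2 in blast)

lemma muMt: "mu ` Mt \<subseteq> {1..N}"
  unfolding Mt_def using f1 by fastforce

lemma sum_u: "sum u {1..N} = (\<Sum>m\<in>Mt. v m (mu m) - pr m)"
proof -
  have "sum u (mu ` Mt) = sum u {1..N}"
  proof (rule sum.mono_neutral_left)
    show "finite {1..N}" by simp
    show "mu ` Mt \<subseteq> {1..N}" by (rule muMt)
    show "\<forall>k\<in>{1..N} - mu ` Mt. u k = 0"
    proof
      fix k assume k: "k \<in> {1..N} - mu ` Mt"
      have "\<not> (\<exists>m\<in>{1..M}. mu m = k)"
      proof
        assume "\<exists>m\<in>{1..M}. mu m = k"
        then obtain m where "m \<in> {1..M}" "mu m = k" by blast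
        then have "m \<in> Mt" using k unfolding Mt_def by auto
        then show False using k \<open>mu m = k\<close> by blast
      qed
      then show "u k = 0" by (rule u_unm)
    qed
  qed
  then have "sum u {1..N} = sum u (mu ` Mt)" by simp
  also have "\<dots> = (\<Sum>m\<in>Mt. u (mu m))" using sum.reindex[OF inj_mu] by simp
  also have "\<dots> = (\<Sum>m\<in>Mt. v m (mu m) - pr m)"
    by (rule sum.cong) (auto simp: Mt_def u_match)
  finally show ?thesis .
qed

lemma sum_q: "sum q {1..M} = (\<Sum>m\<in>Mt. pr m)"
proof -
  have "(\<Sum>m\<in>Mt. pr m) = (\<Sum>m\<in>{1..M}. if mu m \<noteq> 0 then pr m else 0)"
    unfolding Mt_def by (rule sum.inter_filter) simp
  then show ?thesis unfolding q_def by simp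
qed

lemma L_sum: "sum u {1..N} + sum q {1..M} = valmu"
  unfolding sum_u sum_q valmu_def by (simp add: sum_subtractf)

lemma valmu_le: "valmu \<le> Vopt v {1..M} {1..N}"
proof -
  define X where "X = (\<lambda>m. (m, mu m)) ` Mt"
  have XS: "X \<subseteq> {1..M} \<times> {1..N}" unfolding X_def using muMt unfolding Mt_def by auto
  have mX: "matching X" unfolding matching_def X_def Mt_def using f2 by fastforce
  have inj: "inj_on (\<lambda>m. (m, mu m)) Mt" by (rule inj_onI) simp
  have "(\<Sum>(m,k)\<in>X. v m k) = valmu" unfolding X_def valmu_def
    using sum.reindex[OF inj, of "\<lambda>(m,k). v m k"] by simp
  then show ?thesis using Vopt_ge[OF _ _ XS mX, of v] by simp
qed

lemma upperV:
  assumes B: "B \<subseteq> {1..N}"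
  shows "Vopt v {1..M} B \<le> sum u B + sum q {1..M} + real (min M (card B)) * eps"
proof (rule Vopt_le)
  show "finite {1..M}" by simp
  show fB: "finite B" using B finite_subset by blast
  fix X assume X: "X \<subseteq> {1..M} \<times> B" "matching X"
  have "(\<Sum>(m,k)\<in>X. v m k) \<le> sum u B + sum q {1..M} + real (card X) * eps"
  proof (rule weak_dual[OF X])
    show "finite {1..M}" by simp
    show "finite B" by (rule fB)
    show "\<And>m k. m \<in> {1..M} \<Longrightarrow> k \<in> B \<Longrightarrow> v m k \<le> u k + q m + eps" using dual B by blast
    show "\<forall>k\<in>B. 0 \<le> u k" using u_nonneg B by blast
    show "\<forall>m\<in>{1..M}. 0 \<le> q m" using q_props by blast
  qed
  moreover have "card X \<le> min M (card B)" using matching_card[OF X(2) X(1) _ fB] by simp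
  then have "real (card X) * eps \<le> real (min M (card B)) * eps" using epos by (intro mult_right_mono) auto
  ultimately show "(\<Sum>(m,k)\<in>X. v m k) \<le> sum u B + sum q {1..M} + real (min M (card B)) * eps" by linarith
qed

lemma part1: "u n \<le> Vopt v {1..M} {1..N} - Vopt v {1..M} ({1..N} - {n}) + real (min M (N - 1)) * eps"
proof -
  have c: "card ({1..N} - {n}) = N - 1" using nN by simp
  have "Vopt v {1..M} ({1..N} - {n}) \<le> sum u ({1..N} - {n}) + sum q {1..M} + real (min M (N - 1)) * eps"
    using upperV[of "{1..N} - {n}"] c by auto
  moreover have "sum u ({1..N} - {n}) = sum u {1..N} - u n" using nN by (simp add: sum_diff1)
  ultimately show ?thesis using L_sum valmu_le by linarith
qed

lemma part2a: "Vopt v {1..M} {1..N} \<le> valmu + real (min M N) * eps"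
  using upperV[of "{1..N}"] L_sum by simp

end




lemma shortest_path_inj:
  assumes f0: "f 0 = x" and fk: "f k = y" and st: "\<forall>i<k. (f i, f (Suc i)) \<in> R"
    and mn: "\<forall>k'<k. (x, y) \<notin> R ^^ k'"
  shows "inj_on f {0..k}"
proof (rule ccontr)
  assume "\<not> inj_on f {0..k}"
  then obtain i j where ij: "i \<in> {0..k}" "j \<in> {0..k}" "i \<noteq> j" "f i = f j" unfolding inj_on_def by blast
  obtain i j where ij: "i < j" "j \<le> k" "f i = f j"
  proof (cases "i < j")
    case True then show ?thesis using that ij by auto
  next
    case False then show ?thesis using that[of j i] ij by auto
  qed
  define d where "d = j - i"
  define k' where "k' = k - d"
  define g where "g t = (if t \<le> i then f t else f (t + d))" for t
  have d0: "d > 0" "i + d = j" using ij unfolding d_def by auto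
  have k'k: "k' < k" using d0 ij unfolding k'_def by linarith
  have g0: "g 0 = x" unfolding g_def using f0 by simp
  have gk: "g k' = y"
  proof (cases "k' \<le> i")
    case True
    then have "k' = i" "j = k" using ij d0 unfolding k'_def by linarith+
    then show ?thesis unfolding g_def using ij fk by simp
  next
    case False
    then have "k' + d = k" using ij d0 unfolding k'_def by linarith
    then show ?thesis unfolding g_def using False fk by simp
  qed
  have gs: "\<forall>t<k'. (g t, g (Suc t)) \<in> R"
  proof (intro allI impI)
    fix t assume t: "t < k'"
    show "(g t, g (Suc t)) \<in> R"
    proof (cases "t < i")
      case True
      then have "g t = f t" "g (Suc t) = f (Suc t)" unfolding g_def by auto
      then show ?thesis using st True ij by simp
    next
      case False
      show ?thesis
      proof (cases "t = i")
        case True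
        then have "g t = f j" "g (Suc t) = f (Suc j)" unfolding g_def using ij d0 by auto
        moreover have "j < k" using t True d0 unfolding k'_def by linarith
        ultimately show ?thesis using st by simp
      next
        case False
        then have "t > i" using \<open>\<not> t < i\<close> by simp
        then have "g t = f (t + d)" "g (Suc t) = f (Suc (t + d))" unfolding g_def by auto
        moreover have "t + d < k" using t unfolding k'_def using d0 ij by linarith
        ultimately show ?thesis using st by simp
      qed
    qed
  qed
  have "(x, y) \<in> R ^^ k'" unfolding relpow_fun_conv using g0 gk gs by blast
  then show False using mn k'k by blast
qed

context finctx
begin

lemma mu_edem: "m \<in> {1..M} \<Longrightarrow> mu m \<noteq> 0 \<Longrightarrow> edem M v eps be m (mu m)"
  using f4 unfolding edem_def by fastforce

definition "rr = {(a,b). a \<in> {1..M} \<and> b \<in> {1..M} \<and> mu b \<noteq> 0 \<and> mu b \<noteq> n \<and> edem M v eps be a (mu b)}"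
definition "exitp a \<longleftrightarrow> a \<in> {1..M} \<and> (\<not> 0 < be a \<or> (\<exists>j\<in>{1..N}. j \<noteq> n \<and> edem M v eps be a j \<and> (\<forall>m\<in>{1..M}. mu m \<noteq> j)))"

lemma reach_exit:
  assumes m1: "m1 \<in> {1..M}" "mu m1 = n"
  shows "\<exists>a. (m1, a) \<in> rr\<^sup>* \<and> exitp a"
proof (rule ccontr)
  assume ne: "\<not> (\<exists>a. (m1, a) \<in> rr\<^sup>* \<and> exitp a)"
  define R where "R = {a. (m1, a) \<in> rr\<^sup>*}"
  have RC: "R \<subseteq> {1..M}"
  proof
    fix a assume "a \<in> R"
    then have "(m1, a) \<in> rr\<^sup>*" unfolding R_def by simp
    then show "a \<in> {1..M}"
    proof (induction rule: rtrancl_induct)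
      case base then show ?case using m1 by simp
    next
      case (step y z) then show ?case unfolding rr_def by blast
    qed
  qed
  have m1R: "m1 \<in> R" unfolding R_def by simp
  have finR: "finite R" using RC finite_subset by blast
  have Rpos: "\<forall>a\<in>R. 0 < be a" using ne RC unfolding R_def exitp_def by blast
  define G where "G = {j\<in>{1..N}. \<exists>m\<in>R. edem M v eps be m j}"
  have GR: "G \<subseteq> mu ` R"
  proof
    fix j assume "j \<in> G"
    then obtain a where a: "a \<in> R" "j \<in> {1..N}" "edem M v eps be a j" unfolding G_def by blast
    show "j \<in> mu ` R"
    proof (cases "j = n")
      case True then show ?thesis using m1 m1R by force
    next
      case False
      have "\<not> exitp a" using ne a(1) unfolding R_def by blast
      then obtain m where m: "m \<in> {1..M}" "mu m = j" using a RC False unfolding exitp_def by blast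
      have "(a, m) \<in> rr" unfolding rr_def using a RC m False by auto
      then have "m \<in> R" using a(1) unfolding R_def by simp
      then show ?thesis using m by blast
    qed
  qed
  have "card G \<le> card R"
    using card_mono[OF finite_imageI[OF finR] GR] card_image_le[OF finR, of mu] by linarith
  moreover have "card R + 1 \<le> card G" unfolding G_def using f8[OF RC _ Rpos] m1R by blast
  ultimately show False by linarith
qed

lemma phi_exists:
  "\<exists>\<phi>. (\<forall>m\<in>{1..M}. \<phi> m \<noteq> 0 \<longrightarrow> \<phi> m \<in> {1..N} - {n} \<and> edem M v eps be m (\<phi> m)) \<and>
       (\<forall>m\<in>{1..M}. \<forall>m'\<in>{1..M}. \<phi> m = \<phi> m' \<longrightarrow> \<phi> m \<noteq> 0 \<longrightarrow> m = m') \<and>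
       (\<forall>m\<in>{1..M}. 0 < be m \<longrightarrow> \<phi> m \<noteq> 0) \<and>
       (\<forall>m\<in>Mt. mu m \<noteq> n \<longrightarrow> (\<exists>m'\<in>{1..M}. \<phi> m' = mu m))"
proof (cases "\<exists>m1\<in>{1..M}. mu m1 = n")
  case False
  show ?thesis
  proof (intro exI conjI)
    show "\<forall>m\<in>{1..M}. mu m \<noteq> 0 \<longrightarrow> mu m \<in> {1..N} - {n} \<and> edem M v eps be m (mu m)"
      using False f1 mu_edem by fastforce
    show "\<forall>m\<in>{1..M}. \<forall>m'\<in>{1..M}. mu m = mu m' \<longrightarrow> mu m \<noteq> 0 \<longrightarrow> m = m'" using f2 by blast
    show "\<forall>m\<in>{1..M}. 0 < be m \<longrightarrow> mu m \<noteq> 0" using pos by blast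
    show "\<forall>m\<in>Mt. mu m \<noteq> n \<longrightarrow> (\<exists>m'\<in>{1..M}. mu m' = mu m)" unfolding Mt_def by blast
  qed
next
  case True
  then obtain m1 where m1: "m1 \<in> {1..M}" "mu m1 = n" by blast
  obtain a where a: "(m1, a) \<in> rr\<^sup>*" "exitp a" using reach_exit[OF m1] by blast
  have exk: "\<exists>k. (m1, a) \<in> rr ^^ k" using a(1) rtrancl_power by blast
  define k where "k = (LEAST k. (m1, a) \<in> rr ^^ k)"
  have kp: "(m1, a) \<in> rr ^^ k" unfolding k_def using exk by (rule LeastI_ex)
  have kmin: "\<forall>k'<k. (m1, a) \<notin> rr ^^ k'" unfolding k_def using not_less_Least by blast
  obtain f where f: "f 0 = m1" "f k = a" "\<forall>i<k. (f i, f (Suc i)) \<in> rr"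
    using kp unfolding relpow_fun_conv by blast
  have finj: "inj_on f {0..k}" using shortest_path_inj[OF f kmin] .
  have fC: "f i \<in> {1..M}" if "i \<le> k" for i
  proof (cases i)
    case 0 then show ?thesis using f m1 by simp
  next
    case (Suc i0) then show ?thesis using f(3) that unfolding rr_def by auto
  qed
  have fst: "mu (f (Suc i)) \<noteq> 0 \<and> mu (f (Suc i)) \<noteq> n \<and> edem M v eps be (f i) (mu (f (Suc i)))" if "i < k" for i
    using f(3) that unfolding rr_def by blast
  have feq: "i = j" if "i \<le> k" "j \<le> k" "f i = f j" for i j
    using finj that unfolding inj_on_def by auto
  have aC: "a \<in> {1..M}" using a(2) unfolding exitp_def by blast
  define J where "J = (if 0 < be a then (SOME j. j \<in> {1..N} \<and> j \<noteq> n \<and> edem M v eps be a j \<and> (\<forall>m\<in>{1..M}. mu m \<noteq> j)) else 0)"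
  have Jp: "J \<in> {1..N} \<and> J \<noteq> n \<and> edem M v eps be a J \<and> (\<forall>m\<in>{1..M}. mu m \<noteq> J)" if "0 < be a"
  proof -
    have "\<exists>j. j \<in> {1..N} \<and> j \<noteq> n \<and> edem M v eps be a j \<and> (\<forall>m\<in>{1..M}. mu m \<noteq> j)"
      using a(2) that unfolding exitp_def by auto
    then show ?thesis unfolding J_def using that by (simp only: if_True) (rule someI_ex)
  qed
  have J0: "J = 0" if "\<not> 0 < be a" using that unfolding J_def by simp
  define \<phi> where "\<phi> x = (if \<exists>i<k. f i = x then mu (f (Suc (SOME i. i < k \<and> f i = x))) else if x = a then J else mu x)" for x
  have phi_path: "\<phi> (f i) = mu (f (Suc i))" if "i < k" for i
  proof -
    have ex: "\<exists>i'. i' < k \<and> f i' = f i" using that by blast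
    define i' where "i' = (SOME i'. i' < k \<and> f i' = f i)"
    have "i' < k \<and> f i' = f i" unfolding i'_def by (rule someI_ex[OF ex])
    then have "i' = i" using feq that by auto
    then show ?thesis unfolding \<phi>_def using that i'_def by auto
  qed
  have a_notpath: "\<not> (\<exists>i<k. f i = a)"
  proof
    assume "\<exists>i<k. f i = a"
    then obtain i where "i < k" "f i = a" by blast
    then show False using feq[of i k] f(2) by auto
  qed
  have phi_a: "\<phi> a = J" unfolding \<phi>_def using a_notpath by auto
  have phi_off: "\<phi> x = mu x" if "\<forall>i\<le>k. f i \<noteq> x" for x
  proof -
    have "\<not> (\<exists>i<k. f i = x)" "x \<noteq> a" using that f(2) by auto
    then show ?thesis unfolding \<phi>_def by auto
  qed
  have cases3: "(\<exists>i<k. x = f i) \<or> x = a \<or> (\<forall>i\<le>k. f i \<noteq> x)" for x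
    using f(2) by (metis le_neq_implies_less)
  have m1_off: "m1 = f 0" using f(1) by simp
  show ?thesis
  proof (intro exI conjI)
    show P1: "\<forall>m\<in>{1..M}. \<phi> m \<noteq> 0 \<longrightarrow> \<phi> m \<in> {1..N} - {n} \<and> edem M v eps be m (\<phi> m)"
    proof (intro ballI impI)
      fix m assume m: "m \<in> {1..M}" "\<phi> m \<noteq> 0"
      consider (P) i where "i < k" "m = f i" | (A) "m = a" | (O) "\<forall>i\<le>k. f i \<noteq> m" using cases3 by blast
      then show "\<phi> m \<in> {1..N} - {n} \<and> edem M v eps be m (\<phi> m)"
      proof cases
        case P
        have "mu (f (Suc i)) \<in> {1..N}" using f1[OF fC[of "Suc i"]] fst[OF P(1)] P(1) by auto
        then show ?thesis using phi_path[OF P(1)] fst[OF P(1)] P(2) by simp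
      next
        case A
        have "0 < be a" using m(2) phi_a J0 A by auto
        then show ?thesis using Jp phi_a A by simp
      next
        case O
        have e: "\<phi> m = mu m" using phi_off[OF O] .
        have "m \<noteq> m1" using O f(1) by auto
        then have "mu m \<noteq> n" using f2[OF m(1) m1(1)] m1(2) nN by auto
        moreover have "mu m \<in> {1..N}" using f1[OF m(1)] m(2) e by auto
        ultimately show ?thesis using e mu_edem m by auto
      qed
    qed
    show "\<forall>m\<in>{1..M}. \<forall>m'\<in>{1..M}. \<phi> m = \<phi> m' \<longrightarrow> \<phi> m \<noteq> 0 \<longrightarrow> m = m'"
    proof (intro ballI impI)
      fix x y assume xy: "x \<in> {1..M}" "y \<in> {1..M}" "\<phi> x = \<phi> y" "\<phi> x \<noteq> 0"
      have gen: "x = y" if xy: "x \<in> {1..M}" "y \<in> {1..M}" "\<phi> x = \<phi> y" "\<phi> x \<noteq> 0"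
        and ord: "(\<exists>i<k. x = f i) \<or> (x = a \<and> \<not> (\<exists>i<k. y = f i)) \<or> ((\<forall>i\<le>k. f i \<noteq> x) \<and> (\<forall>i\<le>k. f i \<noteq> y))" for x y
      proof -
        consider (P) i where "i < k" "x = f i" | (A) "x = a" "\<not> (\<exists>i<k. y = f i)" | (O) "\<forall>i\<le>k. f i \<noteq> x" "\<forall>i\<le>k. f i \<noteq> y"
          using ord by blast
        then show "x = y"
        proof cases
          case P
          have px: "\<phi> x = mu (f (Suc i))" using phi_path[OF P(1)] P(2) by simp
          consider (P2) j where "j < k" "y = f j" | (A2) "y = a" | (O2) "\<forall>i\<le>k. f i \<noteq> y" using cases3 by blast
          then show ?thesis
          proof cases
            case P2
            have "mu (f (Suc i)) = mu (f (Suc j))" using px phi_path[OF P2(1)] P2(2) xy(3) by simp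
            then have "f (Suc i) = f (Suc j)" using f2[OF fC fC] fst[OF P(1)] P(1) P2(1) by auto
            then have "Suc i = Suc j" using feq[of "Suc i" "Suc j"] P(1) P2(1) by simp
            then show ?thesis using P P2 by simp
          next
            case A2
            have "0 < be a"
            proof (rule ccontr)
              assume "\<not> 0 < be a" then have "\<phi> y = 0" using phi_a J0 A2 by simp
              then show False using xy by simp
            qed
            then have "\<forall>m\<in>{1..M}. mu m \<noteq> J" using Jp by blast
            moreover have "mu (f (Suc i)) = J" using px xy(3) phi_a A2 by simp
            ultimately show ?thesis using fC[of "Suc i"] P(1) by auto
          next
            case O2
            have "mu (f (Suc i)) = mu y" using px xy(3) phi_off[OF O2] by simp
            then have "f (Suc i) = y" using f2[OF fC[of "Suc i"] xy(2)] fst[OF P(1)] P(1) by auto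
            then show ?thesis using O2 P(1) by auto
          qed
        next
          case A
          consider (A2) "y = a" | (O2) "\<forall>i\<le>k. f i \<noteq> y" using cases3 A(2) by blast
          then show ?thesis
          proof cases
            case A2 then show ?thesis using A by simp
          next
            case O2
            have "0 < be a"
            proof (rule ccontr)
              assume "\<not> 0 < be a" then have "\<phi> x = 0" using phi_a J0 A by simp
              then show False using xy by simp
            qed
            then have "\<forall>m\<in>{1..M}. mu m \<noteq> J" using Jp by blast
            moreover have "J = mu y" using xy(3) phi_a A phi_off[OF O2] by simp
            ultimately show ?thesis using xy(2) by auto
          qed
        next
          case O
          have "mu x = mu y" using xy(3) phi_off[OF O(1)] phi_off[OF O(2)] by simp
          then show ?thesis using f2[OF xy(1,2)] xy(4) phi_off[OF O(1)] by simp
        qed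
      qed
      consider (P) "\<exists>i<k. x = f i" | (P') "\<exists>i<k. y = f i" | (A) "x = a" | (A') "y = a" | (O) "(\<forall>i\<le>k. f i \<noteq> x) \<and> (\<forall>i\<le>k. f i \<noteq> y)"
        using cases3 by blast
      then show "x = y"
      proof cases
        case P then show ?thesis using gen xy by blast
      next
        case P' then show ?thesis using gen[of y x] xy by simp
      next
        case A
        show ?thesis
        proof (cases "\<exists>i<k. y = f i")
          case True then show ?thesis using gen[of y x] xy by simp
        next
          case False then show ?thesis using gen[of x y] xy A by blast
        qed
      next
        case A'
        show ?thesis
        proof (cases "\<exists>i<k. x = f i")
          case True then show ?thesis using gen[of x y] xy by blast
        next
          case False then show ?thesis using gen[of y x] xy A' by simp
        qed
      next
        case O then show ?thesis using gen xy by blast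
      qed
    qed
    show "\<forall>m\<in>{1..M}. 0 < be m \<longrightarrow> \<phi> m \<noteq> 0"
    proof (intro ballI impI)
      fix m assume m: "m \<in> {1..M}" "0 < be m"
      consider (P) i where "i < k" "m = f i" | (A) "m = a" | (O) "\<forall>i\<le>k. f i \<noteq> m" using cases3 by blast
      then show "\<phi> m \<noteq> 0"
      proof cases
        case P then show ?thesis using phi_path fst by simp
      next
        case A then show ?thesis using Jp m phi_a by auto
      next
        case O then show ?thesis using phi_off pos m by simp
      qed
    qed
    show "\<forall>m\<in>Mt. mu m \<noteq> n \<longrightarrow> (\<exists>m'\<in>{1..M}. \<phi> m' = mu m)"
    proof (intro ballI impI)
      fix m assume m: "m \<in> Mt" "mu m \<noteq> n"
      have mC: "m \<in> {1..M}" using m unfolding Mt_def by simp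
      show "\<exists>m'\<in>{1..M}. \<phi> m' = mu m"
      proof (cases "\<exists>i\<le>k. f i = m")
        case True
        then obtain i where i: "i \<le> k" "f i = m" by blast
        have "i \<noteq> 0" proof assume "i = 0" then show False using i f(1) m1 m(2) by simp qed
        then obtain i0 where i0: "i = Suc i0" by (cases i) auto
        have "i0 < k" using i i0 by simp
        then have "\<phi> (f i0) = mu m" using phi_path i i0 by simp
        then show ?thesis using fC[of i0] \<open>i0 < k\<close> by auto
      next
        case False
        then have "\<phi> m = mu m" using phi_off by blast
        then show ?thesis using mC by blast
      qed
    qed
  qed
qed

end




context finctx
begin

lemma valmu_bound: "valmu - u n \<le> sum (Wf M v be) (mu ` Mt - {n}) + sum be {1..M}"
proof -
  have MtC: "Mt \<subseteq> {1..M}" unfolding Mt_def by blast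
  have vle: "v m (mu m) \<le> Wf M v be (mu m) + be m" if "m \<in> Mt" for m
    using Wf_ge[where m=m and M=M and v=v and j="mu m" and b=be] that MtC by auto
  have beC: "sum be T \<le> sum be {1..M}" if "T \<subseteq> {1..M}" for T
    using that f3 by (intro sum_mono2) auto
  show ?thesis
  proof (cases "n \<in> mu ` Mt")
    case True
    then obtain m1 where m1: "m1 \<in> Mt" "mu m1 = n" by blast
    define Mt' where "Mt' = Mt - {m1}"
    have fin': "finite Mt'" using finMt unfolding Mt'_def by simp
    have v1: "valmu = v m1 n + (\<Sum>m\<in>Mt'. v m (mu m))"
      unfolding valmu_def Mt'_def using sum.remove[OF finMt m1(1), of "\<lambda>m. v m (mu m)"] m1(2) by simp
    have m1C: "m1 \<in> {1..M}" "mu m1 \<noteq> 0" using m1 unfolding Mt_def by auto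
    have un: "u n = v m1 n - pr m1" using u_match[OF m1C] m1(2) by simp
    have pb: "pr m1 \<le> be m1" using f4[OF m1C] by blast
    have s1: "(\<Sum>m\<in>Mt'. v m (mu m)) \<le> (\<Sum>m\<in>Mt'. Wf M v be (mu m) + be m)"
      using vle unfolding Mt'_def by (intro sum_mono) auto
    have injm: "inj_on mu Mt'" using inj_mu unfolding Mt'_def by (rule inj_on_subset) blast
    have s2: "(\<Sum>m\<in>Mt'. Wf M v be (mu m)) = sum (Wf M v be) (mu ` Mt')"
      using sum.reindex[OF injm, of "Wf M v be"] by (simp add: comp_def)
    have im: "mu ` Mt' = mu ` Mt - {n}"
    proof
      show "mu ` Mt' \<subseteq> mu ` Mt - {n}"
      proof
        fix k assume "k \<in> mu ` Mt'"
        then obtain m where m: "m \<in> Mt'" "k = mu m" by blast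
        have "k \<noteq> n"
        proof
          assume "k = n"
          then have "mu m = mu m1" using m m1 by simp
          then have "m = m1" using f2 m1C m MtC unfolding Mt'_def Mt_def by blast
          then show False using m unfolding Mt'_def by blast
        qed
        then show "k \<in> mu ` Mt - {n}" using m unfolding Mt'_def by blast
      qed
      show "mu ` Mt - {n} \<subseteq> mu ` Mt'" unfolding Mt'_def using m1 by blast
    qed
    have s3: "be m1 + sum be Mt' = sum be Mt" unfolding Mt'_def using sum.remove[OF finMt m1(1), of be] by simp
    have s4: "sum be Mt \<le> sum be {1..M}" using beC MtC by blast
    have "valmu - u n = pr m1 + (\<Sum>m\<in>Mt'. v m (mu m))" using v1 un by simp
    also have "\<dots> \<le> be m1 + ((\<Sum>m\<in>Mt'. Wf M v be (mu m)) + sum be Mt')"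
      using pb s1 by (simp add: sum.distrib)
    also have "\<dots> \<le> sum (Wf M v be) (mu ` Mt - {n}) + sum be {1..M}"
      using s2 im s3 s4 by simp
    finally show ?thesis .
  next
    case False
    have "\<not> (\<exists>m\<in>{1..M}. mu m = n)"
    proof
      assume "\<exists>m\<in>{1..M}. mu m = n"
      then obtain m where "m \<in> {1..M}" "mu m = n" by blast
      then have "m \<in> Mt" using nN unfolding Mt_def by auto
      then show False using False \<open>mu m = n\<close> by blast
    qed
    then have un: "u n = 0" by (rule u_unm)
    have s1: "valmu \<le> (\<Sum>m\<in>Mt. Wf M v be (mu m) + be m)"
      unfolding valmu_def using vle by (intro sum_mono) auto
    have s2: "(\<Sum>m\<in>Mt. Wf M v be (mu m)) = sum (Wf M v be) (mu ` Mt)"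
      using sum.reindex[OF inj_mu, of "Wf M v be"] by (simp add: comp_def)
    have im: "mu ` Mt - {n} = mu ` Mt" using False by blast
    have s4: "sum be Mt \<le> sum be {1..M}" using beC MtC by blast
    show ?thesis using s1 s2 im s4 un by (simp add: sum.distrib)
  qed
qed

lemma part2b: "valmu - u n - real (min M (N - 1)) * eps \<le> Vopt v {1..M} ({1..N} - {n})"
proof -
  obtain \<phi> where P1: "\<forall>m\<in>{1..M}. \<phi> m \<noteq> 0 \<longrightarrow> \<phi> m \<in> {1..N} - {n} \<and> edem M v eps be m (\<phi> m)"
    and P2: "\<forall>m\<in>{1..M}. \<forall>m'\<in>{1..M}. \<phi> m = \<phi> m' \<longrightarrow> \<phi> m \<noteq> 0 \<longrightarrow> m = m'"
    and P3: "\<forall>m\<in>{1..M}. 0 < be m \<longrightarrow> \<phi> m \<noteq> 0"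
    and P4: "\<forall>m\<in>Mt. mu m \<noteq> n \<longrightarrow> (\<exists>m'\<in>{1..M}. \<phi> m' = mu m)"
    using phi_exists by blast
  define Sp where "Sp = {m\<in>{1..M}. \<phi> m \<noteq> 0}"
  define X where "X = (\<lambda>m. (m, \<phi> m)) ` Sp"
  have finSp: "finite Sp" unfolding Sp_def by simp
  have XS: "X \<subseteq> {1..M} \<times> ({1..N} - {n})"
  proof
    fix x assume "x \<in> X"
    then obtain m where m: "m \<in> Sp" "x = (m, \<phi> m)" unfolding X_def by blast
    have "m \<in> {1..M}" "\<phi> m \<noteq> 0" using m(1) unfolding Sp_def by auto
    then have "\<phi> m \<in> {1..N} - {n}" using P1 by blast
    then show "x \<in> {1..M} \<times> ({1..N} - {n})" using m \<open>m \<in> {1..M}\<close> by blast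
  qed
  have mX: "matching X" unfolding matching_def X_def Sp_def using P2 by fastforce
  have injX: "inj_on (\<lambda>m. (m, \<phi> m)) Sp" by (rule inj_onI) simp
  have sumX: "(\<Sum>(m,k)\<in>X. v m k) = (\<Sum>m\<in>Sp. v m (\<phi> m))"
    unfolding X_def using sum.reindex[OF injX, of "\<lambda>(m,k). v m k"] by simp
  have V1: "(\<Sum>m\<in>Sp. v m (\<phi> m)) \<le> Vopt v {1..M} ({1..N} - {n})"
    using Vopt_ge[OF _ _ XS mX, of v] sumX by simp
  have injp: "inj_on \<phi> Sp" unfolding Sp_def by (rule inj_onI) (use P2 in blast)
  have l1: "(\<Sum>m\<in>Sp. Wf M v be (\<phi> m) + be m - eps) \<le> (\<Sum>m\<in>Sp. v m (\<phi> m))"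
  proof (rule sum_mono)
    fix m assume "m \<in> Sp"
    then have "edem M v eps be m (\<phi> m)" using P1 unfolding Sp_def by blast
    then show "Wf M v be (\<phi> m) + be m - eps \<le> v m (\<phi> m)" using Wf_edem by fastforce
  qed
  have l2: "(\<Sum>m\<in>Sp. Wf M v be (\<phi> m) + be m - eps) =
      sum (Wf M v be) (\<phi> ` Sp) + sum be Sp - real (card Sp) * eps"
    using sum.reindex[OF injp, of "Wf M v be"] by (simp add: sum.distrib sum_subtractf)
  have sub: "mu ` Mt - {n} \<subseteq> \<phi> ` Sp"
  proof
    fix k assume "k \<in> mu ` Mt - {n}"
    then obtain m where m: "m \<in> Mt" "k = mu m" "mu m \<noteq> n" by blast
    obtain m' where m': "m' \<in> {1..M}" "\<phi> m' = mu m" using P4 m by blast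
    have "mu m \<noteq> 0" using m unfolding Mt_def by blast
    then have "m' \<in> Sp" using m' unfolding Sp_def by simp
    then show "k \<in> \<phi> ` Sp" using m m' by force
  qed
  have l3: "sum (Wf M v be) (mu ` Mt - {n}) \<le> sum (Wf M v be) (\<phi> ` Sp)"
    using sub finSp Wf_ge0 by (intro sum_mono2) auto
  have l4: "sum be Sp = sum be {1..M}"
  proof (rule sum.mono_neutral_left)
    show "finite {1..M}" by simp
    show "Sp \<subseteq> {1..M}" unfolding Sp_def by blast
    show "\<forall>i\<in>{1..M} - Sp. be i = 0"
    proof
      fix i assume i: "i \<in> {1..M} - Sp"
      then have "\<not> 0 < be i" using P3 unfolding Sp_def by blast
      then show "be i = 0" using f3 i by force
    qed
  qed
  have "card Sp \<le> card {1..M}" unfolding Sp_def by (intro card_mono) auto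
  then have c1: "card Sp \<le> M" by simp
  have "card Sp = card (\<phi> ` Sp)" using card_image[OF injp] by simp
  also have "\<dots> \<le> card ({1..N} - {n})"
  proof (rule card_mono)
    show "finite ({1..N} - {n})" by simp
    show "\<phi> ` Sp \<subseteq> {1..N} - {n}"
    proof
      fix k assume "k \<in> \<phi> ` Sp"
      then obtain m where m: "m \<in> Sp" "k = \<phi> m" by blast
      have "m \<in> {1..M}" "\<phi> m \<noteq> 0" using m(1) unfolding Sp_def by auto
      then show "k \<in> {1..N} - {n}" using P1 m(2) by blast
    qed
  qed
  also have "\<dots> = N - 1" using nN by simp
  finally have c2: "card Sp \<le> N - 1" .
  have "real (card Sp) * eps \<le> real (min M (N - 1)) * eps" using c1 c2 epos by (intro mult_right_mono) auto
  then show ?thesis using V1 l1 l2 l3 l4 valmu_bound by linarith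
qed

lemma main_loc:
  "dma_delta M v s n \<le> Vopt v {1..M} {1..N} - Vopt v {1..M} ({1..N} - {n}) + real (min M (N - 1)) * eps \<and>
   Vopt v {1..M} {1..N} - Vopt v {1..M} ({1..N} - {n}) - (real (min M (N - 1)) + real (min M N)) * eps \<le> dma_delta M v s n"
  using part1 part2a part2b unfolding u_def by (simp add: algebra_simps)

end




theorem lemma1:
  fixes M N :: nat and v :: "nat \<Rightarrow> nat \<Rightarrow> real" and eps :: real
    and s :: dma_state and n :: nat
  assumes "eps > 0"
    and "\<And>s'. dma_reach M N v eps s' \<Longrightarrow> no_ties M N v (dma_beta s')"
    and "dma_output M N v eps s"
    and "n \<in> {1..N}"
  shows "dma_delta M v s n \<le> Vopt v {1..M} {1..N} - Vopt v {1..M} ({1..N} - {n})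
            + 4 * real (min M (N - 1)) * eps \<and>
         dma_delta M v s n \<ge> Vopt v {1..M} {1..N} - Vopt v {1..M} ({1..N} - {n})
            - (real (min M (N - 1)) + real (min M N) + 1) * eps"
proof -
  obtain s0 where s0: "dma_reach M N v eps s0" "\<not> has_proposal M N v s0" "dma_iter M N v eps s0 s"
    using assms(3) unfolding dma_output_def by blast
  obtain sel where sel: "\<forall>m\<in>Aset M N v s0. sel m \<in> {1..N} \<and> dma_gprev s0 m (sel m)"
    and e: "s = step_res M N v eps s0 sel" using s0(3) iter_unfold by blast
  have I0: "inv M N v eps s0" using reach_inv[OF s0(1) assms(1) assms(2)] .
  have ctx: "stepctx M N v eps s0 sel"
    using assms(1) I0 assms(2)[OF s0(1)] sel by (intro stepctx.intro) auto
  have Is: "inv M N v eps s" unfolding e using stepctx.inv_step[OF ctx] .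
  have pos: "\<forall>m\<in>{1..M}. 0 < dma_beta s m \<longrightarrow> dma_mu s m \<noteq> 0"
    unfolding e using stepctx.noprop_pos[OF ctx s0(2)] by blast
  have unm: "\<forall>k\<in>{1..N}. d2d_unmatched M s k \<longrightarrow> (\<forall>m\<in>{1..M}. v m k - dma_beta s m < 0)"
    unfolding e using stepctx.noprop_unm[OF ctx s0(2)] by blast
  have fc: "finctx M N v eps s n"
    using assms(1) Is pos unm assms(4) by (intro finctx.intro) auto
  note mm = finctx.main_loc[OF fc]
  have a: "real (min M (N - 1)) * eps \<le> 4 * real (min M (N - 1)) * eps" using assms(1) by simp
  have b: "0 \<le> eps" using assms(1) by simp
  have c: "(real (min M (N - 1)) + real (min M N) + 1) * eps = (real (min M (N - 1)) + real (min M N)) * eps + eps"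
    by (simp add: algebra_simps)
  show ?thesis using mm a b c by linarith
qed


end
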